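(* For every integer $n\ll 0$, every representation $\pi_1(\mathcal{M}(1,n))\to SL_2(\mathbb{R})$ is trivial; consequently every representation $\pi_1(\mathcal{M}(1,n))\to PSL_2(\mathbb{R})$ is trivial.
   Context: $\mathcal{M}$ is the SnapPy census manifold $m137$ with $\pi_1(\mathcal{M})=\langle \lambda,\beta \mid \beta^{-1}\lambda^{-1}\beta^{-1}\lambda^{-1}\beta^{2}\lambda=\lambda\beta^{-2}\lambda^{-1}\beta^{2}\rangle$, where $\lambda$ is the homological longitude and $\mu=\beta^2\lambda^{-1}\beta^{-3}\lambda^{-1}\beta^2$ is a meridian of $\partial\mathcal{M}$. For an integer $n$, $\mathcal{M}(1,n)$ is the Dehn filling of $\mathcal{M}$ along the slope $\mu+n\lambda$, with $\pi_1(\mathcal{M}(1,n))=\pi_1(\mathcal{M})/\langle\langle\mu\lambda^n\rangle\rangle$; it is an integral homology $3$-sphere. *)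

theory Defs
  imports "HOL-Analysis.Analysis"
begin

type_synonym m2 = "real^2^2"

definition SL2 :: "m2 set" where
  "SL2 = {A. det A = 1}"

fun mpow :: "m2 \<Rightarrow> nat \<Rightarrow> m2" where
  "mpow A 0 = mat 1"
| "mpow A (Suc k) = A ** mpow A k"

definition zpow :: "m2 \<Rightarrow> int \<Rightarrow> m2" where
  "zpow A n = (if 0 \<le> n then mpow A (nat n) else mpow (matrix_inv A) (nat (- n)))"

text \<open>The two sides of the defining relator of pi_1(m137), evaluated at L = image of lambda,
  B = image of beta.\<close>
definition rel_lhs :: "m2 \<Rightarrow> m2 \<Rightarrow> m2" where
  "rel_lhs L B = matrix_inv B ** matrix_inv L ** matrix_inv B ** matrix_inv L ** B ** B ** L"

definition rel_rhs :: "m2 \<Rightarrow> m2 \<Rightarrow> m2" where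
  "rel_rhs L B = L ** matrix_inv B ** matrix_inv B ** matrix_inv L ** B ** B"

text \<open>Image of the meridian mu = beta^2 lambda^-1 beta^-3 lambda^-1 beta^2.\<close>
definition mu_img :: "m2 \<Rightarrow> m2 \<Rightarrow> m2" where
  "mu_img L B = B ** B ** matrix_inv L ** matrix_inv B ** matrix_inv B ** matrix_inv B
                 ** matrix_inv L ** B ** B"

text \<open>Image of the filling relator mu lambda^n.\<close>
definition fill_img :: "m2 \<Rightarrow> m2 \<Rightarrow> int \<Rightarrow> m2" where
  "fill_img L B n = mu_img L B ** zpow L n"

text \<open>A homomorphism pi_1(M(1,n)) -> SL_2(R) is given by the images L, B of the generators,
  which must satisfy both relators.\<close>
definition SL2_rep :: "int \<Rightarrow> m2 \<Rightarrow> m2 \<Rightarrow> bool" where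
  "SL2_rep n L B \<longleftrightarrow> L \<in> SL2 \<and> B \<in> SL2 \<and> rel_lhs L B = rel_rhs L B \<and> fill_img L B n = mat 1"

text \<open>A homomorphism pi_1(M(1,n)) -> PSL_2(R) = SL_2(R)/{+-I}, described through lifts L, B in SL_2(R)
  of the images of the generators: relators hold up to sign.\<close>
definition PSL2_rep :: "int \<Rightarrow> m2 \<Rightarrow> m2 \<Rightarrow> bool" where
  "PSL2_rep n L B \<longleftrightarrow> L \<in> SL2 \<and> B \<in> SL2
     \<and> (rel_lhs L B = rel_rhs L B \<or> rel_lhs L B = - rel_rhs L B)
     \<and> (fill_img L B n = mat 1 \<or> fill_img L B n = - mat 1)"

end

theory Submission
  imports Defs
begin

definition mk :: "real \<Rightarrow> real \<Rightarrow> real \<Rightarrow> real \<Rightarrow> m2" where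
  "mk a b c d = vector [vector [a, b], vector [c, d]]"

lemma mk_nth [simp]:
  "mk a b c d $ 1 $ 1 = a" "mk a b c d $ 1 $ 2 = b" "mk a b c d $ 2 $ 1 = c" "mk a b c d $ 2 $ 2 = d"
  by (simp_all add: mk_def)

lemma m2_eq: "(A::m2) = B \<longleftrightarrow> A$1$1 = B$1$1 \<and> A$1$2 = B$1$2 \<and> A$2$1 = B$2$1 \<and> A$2$2 = B$2$2"
  by (auto simp: vec_eq_iff forall_2)

lemma m2_mk: "(A::m2) = mk (A$1$1) (A$1$2) (A$2$1) (A$2$2)"
  by (simp add: m2_eq)

lemma mk_eq: "mk a b c d = mk a' b' c' d' \<longleftrightarrow> a = a' \<and> b = b' \<and> c = c' \<and> d = d'"
  by (simp add: m2_eq)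

lemma mk_mult: "mk a b c d ** mk e f g h = mk (a*e+b*g) (a*f+b*h) (c*e+d*g) (c*f+d*h)"
  by (simp add: m2_eq matrix_matrix_mult_def sum_2)

lemma mat1_mk: "(mat 1 :: m2) = mk 1 0 0 1"
  by (simp add: m2_eq mat_def)

lemma neg_mk: "- mk a b c d = mk (-a) (-b) (-c) (-d)"
  by (simp add: m2_eq)

lemma det_mk: "det (mk a b c d) = a*d - b*c"
  by (simp add: det_2)

lemma matrix_inv_eq:
  assumes "(A::m2) ** X = mat 1" "X ** A = mat 1"
  shows "matrix_inv A = X"
proof -
  have ex: "\<exists>A'. A ** A' = mat 1 \<and> A' ** A = mat 1" using assms by blast
  define A' where "A' = matrix_inv A"
  have h: "A ** A' = mat 1 \<and> A' ** A = mat 1"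
    unfolding A'_def matrix_inv_def by (rule someI_ex[OF ex])
  have "A' = A' ** (A ** X)" using assms by simp
  also have "\<dots> = (A' ** A) ** X" by (simp add: matrix_mul_assoc)
  also have "\<dots> = X" using h by simp
  finally show ?thesis unfolding A'_def .
qed

lemma inv_mk: "a*d - b*c = 1 \<Longrightarrow> matrix_inv (mk a b c d) = mk d (-b) (-c) a"
  by (rule matrix_inv_eq) (simp_all add: mk_mult mat1_mk mk_eq algebra_simps)

lemma det1_inv:
  assumes "det (A::m2) = 1"
  shows "A ** matrix_inv A = mat 1" "matrix_inv A ** A = mat 1"
proof -
  have A: "A = mk (A$1$1) (A$1$2) (A$2$1) (A$2$2)" by (rule m2_mk)
  have d: "A$1$1 * A$2$2 - A$1$2 * A$2$1 = 1" using assms by (simp add: det_2)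
  show "A ** matrix_inv A = mat 1" "matrix_inv A ** A = mat 1"
    by (subst (1 2) A, simp add: inv_mk[OF d] mk_mult mat1_mk mk_eq algebra_simps d)+
qed

lemma mpow_Suc_right: "mpow A (Suc k) = mpow A k ** A"
  by (induction k) (simp_all add: matrix_mul_assoc)

locale cj =
  fixes P Q :: m2
  assumes PQ: "P ** Q = mat 1" and QP: "Q ** P = mat 1"
begin

definition cf :: "m2 \<Rightarrow> m2" where "cf X = Q ** X ** P"

lemma cf_mult: "cf X ** cf Y = cf (X ** Y)"
proof -
  have "Q ** X ** P ** (Q ** Y ** P) = Q ** X ** (P ** Q) ** Y ** P"
    by (simp add: matrix_mul_assoc)
  then show ?thesis unfolding cf_def using PQ by (simp add: matrix_mul_assoc)
qed

lemma cf_one: "cf (mat 1) = mat 1"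
  unfolding cf_def using QP by simp

lemma cf_inv:
  assumes "det X = 1"
  shows "matrix_inv (cf X) = cf (matrix_inv X)"
  by (rule matrix_inv_eq) (simp_all add: cf_mult det1_inv[OF assms] cf_one)

lemma cf_det: "det (cf X) = det X"
proof -
  have "det Q * det P = 1" using QP det_mul[of Q P] by simp
  then show ?thesis unfolding cf_def by (simp add: det_mul)
qed

lemma cf_mpow: "mpow (cf X) k = cf (mpow X k)"
  by (induction k) (simp_all add: cf_one cf_mult)

lemma cf_rep:
  assumes "SL2_rep n L B"
  shows "SL2_rep n (cf L) (cf B)"
proof -
  have dL: "det L = 1" and dB: "det B = 1" using assms by (auto simp: SL2_rep_def SL2_def)
  have dLi: "det (matrix_inv L) = 1"
    using det_mul[of L "matrix_inv L"] det1_inv[OF dL] dL by simp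
  have iL: "matrix_inv (cf L) = cf (matrix_inv L)" by (rule cf_inv[OF dL])
  have iB: "matrix_inv (cf B) = cf (matrix_inv B)" by (rule cf_inv[OF dB])
  have r: "rel_lhs (cf L) (cf B) = cf (rel_lhs L B)" "rel_rhs (cf L) (cf B) = cf (rel_rhs L B)"
    unfolding rel_lhs_def rel_rhs_def iL iB by (simp_all add: cf_mult)
  have m: "mu_img (cf L) (cf B) = cf (mu_img L B)"
    unfolding mu_img_def iL iB by (simp add: cf_mult)
  have z: "zpow (cf L) n = cf (zpow L n)"
    unfolding zpow_def iL by (simp add: cf_mpow)
  have f: "fill_img (cf L) (cf B) n = cf (fill_img L B n)"
    unfolding fill_img_def m z by (simp add: cf_mult)
  show ?thesis using assms unfolding SL2_rep_def SL2_def
    by (simp add: cf_det r f cf_one)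
qed

end

lemma companion_conj_aux:
  fixes l1 l2 l3 l4 v1 v2 :: real
  assumes d: "l1*l4 - l2*l3 = 1"
    and del: "l3* v1^2 + (l4 - l1)* v1* v2 - l2* v2^2 \<noteq> 0"
  defines "w1 \<equiv> l1* v1 + l2* v2" and "w2 \<equiv> l3* v1 + l4* v2"
  defines "\<delta> \<equiv> l3* v1^2 + (l4 - l1)* v1* v2 - l2* v2^2"
  shows "mk v1 w1 v2 w2 ** mk (w2/\<delta>) (-w1/\<delta>) (-v2/\<delta>) (v1/\<delta>) = mat 1"
    "mk (w2/\<delta>) (-w1/\<delta>) (-v2/\<delta>) (v1/\<delta>) ** mk v1 w1 v2 w2 = mat 1"
    "mk (w2/\<delta>) (-w1/\<delta>) (-v2/\<delta>) (v1/\<delta>) ** mk l1 l2 l3 l4 ** mk v1 w1 v2 w2 = mk 0 (-1) 1 (l1+l4)"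
proof -
  have dd: "\<delta> \<noteq> 0" using del unfolding \<delta>_def .
  have e: "v1*w2 - w1* v2 = \<delta>" unfolding w1_def w2_def \<delta>_def by (simp add: algebra_simps power2_eq_square)
  show "mk v1 w1 v2 w2 ** mk (w2/\<delta>) (-w1/\<delta>) (-v2/\<delta>) (v1/\<delta>) = mat 1"
    using dd e by (simp add: mk_mult mat1_mk mk_eq field_simps)
  show "mk (w2/\<delta>) (-w1/\<delta>) (-v2/\<delta>) (v1/\<delta>) ** mk v1 w1 v2 w2 = mat 1"
    using dd e by (simp add: mk_mult mat1_mk mk_eq field_simps)
  have LP: "mk l1 l2 l3 l4 ** mk v1 w1 v2 w2 = mk v1 w1 v2 w2 ** mk 0 (-1) 1 (l1+l4)"
    using d unfolding w1_def w2_def by (simp add: mk_mult mk_eq) algebra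
  have QP: "mk (w2/\<delta>) (-w1/\<delta>) (-v2/\<delta>) (v1/\<delta>) ** mk v1 w1 v2 w2 = mat 1"
    using dd e by (simp add: mk_mult mat1_mk mk_eq field_simps)
  show "mk (w2/\<delta>) (-w1/\<delta>) (-v2/\<delta>) (v1/\<delta>) ** mk l1 l2 l3 l4 ** mk v1 w1 v2 w2 = mk 0 (-1) 1 (l1+l4)"
    by (simp only: matrix_mul_assoc[symmetric] LP) (metis QP matrix_mul_lid matrix_mul_assoc)
qed

lemma companion_conj:
  assumes "det (L::m2) = 1" "L \<noteq> mat 1" "L \<noteq> - mat 1"
  shows "\<exists>P Q. P ** Q = mat 1 \<and> Q ** P = mat 1 \<and> Q ** L ** P = mk 0 (-1) 1 (L$1$1 + L$2$2)"
proof -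
  define l1 l2 l3 l4 where "l1 = L$1$1" "l2 = L$1$2" "l3 = L$2$1" "l4 = L$2$2"
  have Lm: "L = mk l1 l2 l3 l4" unfolding l1_l2_l3_l4_def by (rule m2_mk)
  have d: "l1*l4 - l2*l3 = 1" using assms(1) unfolding Lm det_mk .
  have "\<exists>v1 v2. l3* v1^2 + (l4 - l1)* v1* v2 - l2* v2^2 \<noteq> 0"
  proof (cases "l3 = 0")
    case False then show ?thesis by (intro exI[of _ 1] exI[of _ 0]) simp
  next
    case l3: True
    show ?thesis
    proof (cases "l2 = 0")
      case False then show ?thesis by (intro exI[of _ 0] exI[of _ 1]) simp
    next
      case l2: True
      have "l4 \<noteq> l1"
      proof
        assume h: "l4 = l1"
        then have "l1 * l1 = 1" using d l2 l3 by simp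
        then have "l1 = 1 \<or> l1 = -1" by algebra
        then show False using assms(2,3) h l2 l3 unfolding Lm by (auto simp: mat1_mk neg_mk mk_eq)
      qed
      then show ?thesis using l2 l3 by (intro exI[of _ 1] exI[of _ 1]) simp
    qed
  qed
  then obtain v1 v2 where "l3* v1^2 + (l4 - l1)* v1* v2 - l2* v2^2 \<noteq> 0" by blast
  from companion_conj_aux[OF d this] show ?thesis unfolding Lm by (auto simp: l1_l2_l3_l4_def)
qed

definition relE0 :: "real \<Rightarrow> real \<Rightarrow> real \<Rightarrow> real \<Rightarrow> real \<Rightarrow> real" where
  "relE0 y ba bb bc bd = ba*bb*bd^2*y^2 + bb*bd^3*y^2 - ba^3*bc*y - ba*bb*bc^2*y + 2*ba*bb^2*bd*y - ba^2*bc*bd*y - ba*bb*bc*bd*y - bb*bc^2*bd*y + 2*bb^2*bd^2*y + bd^4*y - ba^4 + ba*bb^3 - 2*ba^2*bb*bc - ba^2*bc^2 - bb^2*bc^2 - ba^2*bb*bd + bb^3*bd + bb^2*bc*bd - 2*ba*bc^2*bd - bb*bc^2*bd - ba*bb*bd^2 - bc^2*bd^2 + bb*bd^3 - bc*bd^3"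

definition relE1 :: "real \<Rightarrow> real \<Rightarrow> real \<Rightarrow> real \<Rightarrow> real \<Rightarrow> real" where
  "relE1 y ba bb bc bd = ba*bb*bd^2*y^3 + bb*bd^3*y^3 + 2*ba*bb^2*bd*y^2 - ba*bb*bc*bd*y^2 - ba^2*bd^2*y^2 + 2*bb^2*bd^2*y^2 - bb*bc*bd^2*y^2 + bd^4*y^2 + ba*bb^3*y - ba^2*bb*bc*y - 3*ba^2*bb*bd*y + bb^3*bd*y + ba^2*bc*bd*y - 2*ba*bb*bc*bd*y - bb^2*bc*bd*y - ba*bb*bd^2*y - ba*bc*bd^2*y - bb*bc*bd^2*y + bb*bd^3*y - 2*bc*bd^3*y - ba^3*bb - ba^2*bb^2 - ba*bb^2*bc - bb^3*bc - ba*bb*bc^2 + ba^3*bd - ba^2*bb*bd - bb^2*bc*bd + ba*bc^2*bd - bb*bc^2*bd - ba*bc*bd^2 - bb*bc*bd^2 + bc^2*bd^2 - bc*bd^3"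

definition relE2 :: "real \<Rightarrow> real \<Rightarrow> real \<Rightarrow> real \<Rightarrow> real \<Rightarrow> real" where
  "relE2 y ba bb bc bd = ba^3*bc*y^2 + ba*bb*bc^2*y^2 + ba^2*bc*bd*y^2 - ba*bb*bc*bd*y^2 + bb*bc^2*bd*y^2 - bb*bc*bd^2*y^2 + ba^4*y + ba^2*bb*bc*y - ba*bb^2*bc*y + ba^2*bc^2*y + ba*bb*bc^2*y - ba^2*bb*bd*y - bb^2*bc*bd*y + 2*ba*bc^2*bd*y - ba^2*bd^2*y - ba*bb*bd^2*y - bb*bc*bd^2*y + bc^2*bd^2*y - bc*bd^3*y - ba^3*bb - ba^2*bb^2 + ba^2*bb*bc - ba*bb^2*bc - ba*bb*bc^2 + bb*bc^3 - ba^2*bb*bd - ba*bb^2*bd - bb^2*bc*bd - bb*bc^2*bd - ba*bc*bd^2 + bc^2*bd^2 - ba*bd^3 - bc*bd^3"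

definition relE3 :: "real \<Rightarrow> real \<Rightarrow> real \<Rightarrow> real \<Rightarrow> real \<Rightarrow> real" where
  "relE3 y ba bb bc bd = 0 - ba*bb*bc*bd*y^3 - bb*bc*bd^2*y^3 + ba^2*bb*bc*y^2 - ba*bb^2*bc*y^2 + ba*bb*bc^2*y^2 - ba^2*bb*bd*y^2 + ba^2*bc*bd*y^2 + 2*ba*bb*bc*bd*y^2 - bb^2*bc*bd*y^2 + bb*bc^2*bd*y^2 - ba*bb*bd^2*y^2 + bb*bc*bd^2*y^2 - bc*bd^3*y^2 + ba^3*bb*y - ba^2*bb^2*y + 2*ba^2*bb*bc*y - ba^2*bc^2*y + ba*bb*bc^2*y + bb^2*bc^2*y + ba^3*bd*y + ba^2*bb*bd*y - ba*bb^2*bd*y + ba*bb*bc*bd*y + ba*bc^2*bd*y + bb*bc^2*bd*y - ba*bb*bd^2*y + ba*bc*bd^2*y + 2*bc^2*bd^2*y - ba*bd^3*y - bb*bd^3*y + bc*bd^3*y + ba^3*bb - ba^2*bb^2 - ba^3*bc + ba*bb^2*bc - ba*bb*bc^2 - bb^2*bc^2 - ba*bc^3 - 2*ba*bb^2*bd + ba^2*bc*bd - bc^3*bd - bb^2*bd^2 + ba*bc*bd^2 - 2*bb*bc*bd^2 - bd^4"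

definition muE00 :: "real \<Rightarrow> real \<Rightarrow> real \<Rightarrow> real \<Rightarrow> real \<Rightarrow> real" where
  "muE00 y ba bb bc bd = ba^5*bb*bc*y^2 + 2*ba^3*bb^2*bc^2*y^2 + ba*bb^3*bc^3*y^2 + 2*ba^4*bb*bc*bd*y^2 + 4*ba^2*bb^2*bc^2*bd*y^2 + 2*bb^3*bc^3*bd*y^2 + ba^4*bd^3*y^2 + 2*ba^2*bb*bc*bd^3*y^2 + bb^2*bc^2*bd^3*y^2 + ba^6*bb*y - ba^6*bc*y + 2*ba^4*bb^2*bc*y - 2*ba^4*bb*bc^2*y + 2*ba^2*bb^3*bc^2*y - 2*ba^2*bb^2*bc^3*y + bb^4*bc^3*y - bb^3*bc^4*y + ba^5*bb*bd*y - ba^5*bc*bd*y - ba^3*bb^2*bc*bd*y + ba^3*bb*bc^2*bd*y - 2*ba*bb^3*bc^2*bd*y + 2*ba*bb^2*bc^3*bd*y + ba^4*bb*bd^2*y - ba^4*bc*bd^2*y - bb^3*bc^2*bd^2*y + bb^2*bc^3*bd^2*y - ba^3*bb*bd^3*y + ba^3*bc*bd^3*y - ba*bb^2*bc*bd^3*y + ba*bb*bc^2*bd^3*y - ba^2*bb*bd^4*y + ba^2*bc*bd^4*y - bb^2*bc*bd^4*y + bb*bc^2*bd^4*y - ba^7 - ba^5*bb^2 - 4*ba^5*bb*bc - 2*ba^3*bb^3*bc - ba^5*bc^2 - 6*ba^3*bb^2*bc^2 - ba*bb^4*bc^2 - 2*ba^3*bb*bc^3 - 2*ba*bb^3*bc^3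 - ba*bb^2*bc^4 - 2*ba^4*bb^2*bd - ba^4*bb*bc*bd - 3*ba^2*bb^3*bc*bd - 2*ba^4*bc^2*bd - 6*ba^2*bb^2*bc^2*bd - bb^4*bc^2*bd - 3*ba^2*bb*bc^3*bd - bb^3*bc^3*bd - bb^2*bc^4*bd - 2*ba^3*bb^2*bd^2 - 2*ba*bb^3*bc*bd^2 - 2*ba^3*bc^2*bd^2 - 5*ba*bb^2*bc^2*bd^2 - 2*ba*bb*bc^3*bd^2 - ba^2*bb^2*bd^3 - ba^2*bb*bc*bd^3 - bb^3*bc*bd^3 - ba^2*bc^2*bd^3 - 2*bb^2*bc^2*bd^3 - bb*bc^3*bd^3 - 2*ba*bb*bc*bd^4 - bb*bc*bd^5"

definition muE10 :: "real \<Rightarrow> real \<Rightarrow> real \<Rightarrow> real \<Rightarrow> real \<Rightarrow> real" where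
  "muE10 y ba bb bc bd = ba^4*bb*bc^2*y^2 + ba^2*bb^2*bc^3*y^2 + 3*ba^3*bb*bc^2*bd*y^2 + 3*ba*bb^2*bc^3*bd*y^2 + 2*ba^2*bb*bc^2*bd^2*y^2 + 2*bb^2*bc^3*bd^2*y^2 + ba^3*bc*bd^3*y^2 + ba*bb*bc^2*bd^3*y^2 + ba^2*bc*bd^4*y^2 + bb*bc^2*bd^4*y^2 + ba^5*bb*bc*y - ba^5*bc^2*y + ba^3*bb^2*bc^2*y - ba^3*bb*bc^3*y - ba*bb^2*bc^4*y + 2*ba^4*bb*bc*bd*y - 2*ba^4*bc^2*bd*y + ba^2*bb^2*bc^2*bd*y + ba^2*bb*bc^3*bd*y - bb^3*bc^3*bd*y - bb^2*bc^4*bd*y + ba^3*bb*bc*bd^2*y - 2*ba^3*bc^2*bd^2*y + ba*bb^2*bc^2*bd^2*y + 3*ba*bb*bc^3*bd^2*y - 2*ba^2*bb*bc*bd^3*y - 2*bb^2*bc^2*bd^3*y + bb*bc^3*bd^3*y + 2*ba*bc^2*bd^4*y - ba^2*bd^5*y - bb*bc*bd^5*y + bc^2*bd^5*y - ba^6*bc - ba^4*bb^2*bc - 3*ba^4*bb*bc^2 - 2*ba^2*bb^3*bc^2 - ba^4*bc^3 - 3*ba^2*bb^2*bc^3 - bb^4*bc^3 - ba^2*bb*bc^4 - ba^5*bc*bd - ba^3*bb^2*bc*bd - 4*ba^3*bb*bc^2*bd - ba*bb^3*bc^2*bd - 3*ba^3*bc^3*bd - 6*ba*bb^2*bc^3*bd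 - 2*ba*bb*bc^4*bd - ba^4*bb*bd^2 - 3*ba^2*bb^2*bc*bd^2 - 2*ba^2*bb*bc^2*bd^2 - 2*bb^3*bc^2*bd^2 - 4*ba^2*bc^3*bd^2 - 3*bb^2*bc^3*bd^2 - bb*bc^4*bd^2 - ba^3*bb*bd^3 - ba*bb^2*bc*bd^3 - 4*ba*bb*bc^2*bd^3 - 3*ba*bc^3*bd^3 - ba^2*bb*bd^4 - bb^2*bc*bd^4 - 3*bb*bc^2*bd^4 - bc^3*bd^4 - ba*bc*bd^5 - bc*bd^6"

lemma certQ:
  fixes y ba bb bc bd :: real
  shows "1 * ((y-2)*(y+1)*((y+1)*(ba+bd)^4 - (y+2)*(ba+bd)^2) - 1) = (0 - 3*ba^3*bd*y^3 + ba^2*bb*bd*y^3 - 5*ba^2*bd^2*y^3 + ba*bb*bd^2*y^3 - 2*ba*bd^3*y^3 + ba^4*y^2 - 3*ba^3*bb*y^2 + ba^2*bb^2*y^2 + 3*ba^3*bc*y^2 - ba^2*bb*bc*y^2 + 5*ba^3*bd*y^2 - 8*ba^2*bb*bd*y^2 + ba*bb^2*bd*y^2 + 2*ba^2*bc*bd*y^2 + 8*ba^2*bd^2*y^2 - 5*ba*bb*bd^2*y^2 - 3*ba*bc*bd^2*y^2 + bb*bc*bd^2*y^2 + 5*ba*bd^3*y^2 - 2*bc*bd^3*y^2 + bd^4*y^2 + 4*ba^4*y - 3*ba^2*bb^2*y - ba^2*bb*bc*y + ba*bb^2*bc*y + 3*ba^2*bc^2*y - ba*bb*bc^2*y + 10*ba^3*bd*y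 - 3*ba*bb^2*bd*y + ba^2*bc*bd*y + 3*ba*bb*bc*bd*y - 5*bb^2*bc*bd*y + 5*ba*bc^2*bd*y - bb*bc^2*bd*y + 2*ba^2*bd^2*y + 6*ba*bb*bd^2*y + 2*ba*bc*bd^2*y + bb*bc*bd^2*y + 2*bc^2*bd^2*y + bc*bd^3*y + bd^4*y + 3*ba^2*y^3 - ba*bb*y^3 + 5*ba*bd*y^3 - bb*bd*y^3 + 2*bd^2*y^3 - 2*ba^2*y^2 + 4*ba*bb*y^2 - 4*ba*bd*y^2 + 4*bb*bd*y^2 - 2*bd^2*y^2 - 7*ba^2*y + 4*ba*bb*y + ba*bc*y - bb*bc*y - ba*bd*y - 2*bb*bd*y + bc*bd*y + bd^2*y - 4*ba^2 + 3*ba*bb - 3*ba*bc + bb*bc - 2*bc*bd + bd^2 - 2*y - 2) * relE0 y ba bb bc bd + (3*ba^3*bd*y^2 - ba^2*bb*bd*y^2 + 5*ba^2*bd^2*y^2 - ba*bb*bd^2*y^2 + 2*ba*bd^3*y^2 - ba^4*y + 3*ba^3*bb*y - ba^2*bb^2*y - 3*ba^3*bc*y + ba^2*bb*bc*y - 5*ba^3*bd*y + 8*ba^2*bb*bd*y - ba*bb^2*bd*y - 2*ba^2*bc*bd*y - 8*ba^2*bd^2*y + 5*ba*bb*bd^2*y + 3*ba*bc*bd^2*y - bb*bc*bd^2*y - 5*ba*bd^3*y + 2*bc*bd^3*y - bd^4*y - 4*ba^4 + 3*ba^2*bb^2 + ba^2*bb*bc - ba*bb^2*bc - 3*ba^2*bc^2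 + ba*bb*bc^2 - 10*ba^3*bd + 3*ba*bb^2*bd - ba^2*bc*bd - 3*ba*bb*bc*bd + 5*bb^2*bc*bd - 5*ba*bc^2*bd + bb*bc^2*bd - 2*ba^2*bd^2 - 6*ba*bb*bd^2 - 2*ba*bc*bd^2 - bb*bc*bd^2 - 2*bc^2*bd^2 - bc*bd^3 - bd^4 - 3*ba^2*y^2 + ba*bb*y^2 - 5*ba*bd*y^2 + bb*bd*y^2 - 2*bd^2*y^2 + 2*ba^2*y - 4*ba*bb*y + 4*ba*bd*y - 4*bb*bd*y + 2*bd^2*y + 6*ba^2 - 4*ba*bb - 3*ba*bc + 2*bb*bc + ba*bd + 2*bb*bd - 3*bc*bd - bd^2 + 2) * relE1 y ba bb bc bd + (0 - 3*ba^3*bd*y^2 + ba^2*bb*bd*y^2 - 5*ba^2*bd^2*y^2 + ba*bb*bd^2*y^2 - 2*ba*bd^3*y^2 + ba^4*y - 3*ba^3*bb*y + ba^2*bb^2*y + 3*ba^3*bc*y - ba^2*bb*bc*y + 5*ba^3*bd*y - 8*ba^2*bb*bd*y + ba*bb^2*bd*y + 2*ba^2*bc*bd*y + 8*ba^2*bd^2*y - 5*ba*bb*bd^2*y - 3*ba*bc*bd^2*y + bb*bc*bd^2*y + 5*ba*bd^3*y - 2*bc*bd^3*y + bd^4*y + 4*ba^4 - 3*ba^2*bb^2 - ba^2*bb*bc + ba*bb^2*bc + 3*ba^2*bc^2 - ba*bb*bc^2 + 10*ba^3*bd - 3*ba*bb^2*bd + ba^2*bc*bd + 3*ba*bb*bc*bd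 - 5*bb^2*bc*bd + 5*ba*bc^2*bd - bb*bc^2*bd + 2*ba^2*bd^2 + 6*ba*bb*bd^2 + 2*ba*bc*bd^2 + bb*bc*bd^2 + 2*bc^2*bd^2 + bc*bd^3 + bd^4 + 3*ba^2*y^2 - ba*bb*y^2 + 5*ba*bd*y^2 - bb*bd*y^2 + 2*bd^2*y^2 - 2*ba^2*y + 6*ba*bb*y - bb^2*y - 4*ba*bd*y + 6*bb*bd*y - 2*bd^2*y - 6*ba^2 - 3*ba*bb + 6*bb^2 + ba*bc - bb*bc - ba*bd - 6*bb*bd + bc*bd + bd^2 - 1) * relE2 y ba bb bc bd + (0 - 3*ba^2*y + ba*bb*y - 2*ba*bd*y + 3*ba^2 - 3*ba*bb - 3*ba*bc + bb*bc + 2*ba*bd + bb*bd - 2*bc*bd - bd^2 - 1) * relE3 y ba bb bc bd + (3*ba^4*bd^2*y^4 - ba^3*bb*bd^2*y^4 + 5*ba^3*bd^3*y^4 - ba^2*bb*bd^3*y^4 + 2*ba^2*bd^4*y^4 - ba^5*bd*y^3 + 6*ba^4*bb*bd*y^3 - 2*ba^3*bb^2*bd*y^3 - 6*ba^4*bc*bd*y^3 + 5*ba^3*bb*bc*bd*y^3 - ba^2*bb^2*bc*bd*y^3 - 8*ba^4*bd^2*y^3 + 11*ba^3*bb*bd^2*y^3 - ba^2*bb^2*bd^2*y^3 - 4*ba^3*bc*bd^2*y^3 + 5*ba^2*bb*bc*bd^2*y^3 - ba*bb^2*bc*bd^2*y^3 - 13*ba^3*bd^3*y^3 + 3*ba^2*bb*bd^3*y^3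 + ba*bb^2*bd^3*y^3 + 6*ba^2*bc*bd^3*y^3 - 7*ba^2*bd^4*y^3 - 2*ba*bb*bd^4*y^3 + 4*ba*bc*bd^4*y^3 - ba*bd^5*y^3 - ba^5*bb*y^2 + 3*ba^4*bb^2*y^2 - ba^3*bb^3*y^2 + ba^5*bc*y^2 - 7*ba^4*bb*bc*y^2 + 5*ba^3*bb^2*bc*y^2 - ba^2*bb^3*bc*y^2 + 3*ba^4*bc^2*y^2 - 4*ba^3*bb*bc^2*y^2 + ba^2*bb^2*bc^2*y^2 - 6*ba^5*bd*y^2 - 6*ba^4*bb*bd*y^2 + 6*ba^3*bb^2*bd*y^2 + ba^2*bb^3*bd*y^2 + 7*ba^4*bc*bd*y^2 - 9*ba^3*bb*bc*bd*y^2 + 6*ba^2*bb^2*bc*bd*y^2 - ba*bb^3*bc*bd*y^2 - 7*ba^3*bc^2*bd*y^2 + ba^2*bb*bc^2*bd*y^2 - 10*ba^4*bd^2*y^2 - 10*ba^3*bb*bd^2*y^2 - 4*ba^2*bb^2*bd^2*y^2 + 2*ba*bb^3*bd^2*y^2 + 4*ba^3*bc*bd^2*y^2 - 3*ba^2*bb*bc*bd^2*y^2 + 8*ba*bb^2*bc*bd^2*y^2 - 15*ba^2*bc^2*bd^2*y^2 + 6*ba*bb*bc^2*bd^2*y^2 - bb^2*bc^2*bd^2*y^2 + ba^3*bd^3*y^2 - 7*ba^2*bb*bd^3*y^2 - 7*ba*bb^2*bd^3*y^2 - 8*ba^2*bc*bd^3*y^2 - ba*bb*bc*bd^3*y^2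 + bb^2*bc*bd^3*y^2 - 3*ba*bc^2*bd^3*y^2 + bb*bc^2*bd^3*y^2 + 5*ba*bb*bd^4*y^2 - 7*ba*bc*bd^4*y^2 - 3*bb*bc*bd^4*y^2 + 2*bc^2*bd^4*y^2 - 2*ba*bd^5*y^2 + bb*bd^5*y^2 - bc*bd^5*y^2 + ba^6*y - 7*ba^5*bb*y + 2*ba^4*bb^2*y + ba^2*bb^4*y + 7*ba^5*bc*y - 5*ba^4*bb*bc*y + ba^3*bb^2*bc*y + ba^2*bb^3*bc*y + ba^4*bc^2*y - 7*ba^3*bb*bc^2*y + 4*ba^2*bb^2*bc^2*y - ba*bb^3*bc^2*y + 6*ba^3*bc^3*y - 5*ba^2*bb*bc^3*y + ba*bb^2*bc^3*y + 9*ba^5*bd*y - 14*ba^4*bb*bd*y + 3*ba^3*bb^2*bd*y - 8*ba^2*bb^3*bd*y + ba*bb^4*bd*y + 8*ba^4*bc*bd*y - 12*ba^3*bb*bc*bd*y - ba^2*bb^2*bc*bd*y + 9*ba*bb^3*bc*bd*y + 9*ba^3*bc^2*bd*y - 8*ba^2*bb*bc^2*bd*y - 8*ba*bb^2*bc^2*bd*y + 5*bb^3*bc^2*bd*y + 4*ba^2*bc^3*bd*y - 5*ba*bb*bc^3*bd*y + bb^2*bc^3*bd*y + 19*ba^4*bd^2*y - 8*ba*bb^3*bd^2*y - 7*ba^3*bc*bd^2*y + 6*ba^2*bb*bc*bd^2*y - 9*ba*bb^2*bc*bd^2*y - 4*bb^3*bc*bd^2*y + 14*ba^2*bc^2*bd^2*y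 - 7*ba*bb*bc^2*bd^2*y + 3*bb^2*bc^2*bd^2*y - 6*ba*bc^3*bd^2*y + 12*ba^3*bd^3*y + 12*ba*bb^2*bd^3*y - 4*ba*bb*bc*bd^3*y - bb^2*bc*bd^3*y + 6*ba*bc^2*bd^3*y - 4*bc^3*bd^3*y + 9*ba^2*bd^4*y - 6*ba*bb*bd^4*y + bb^2*bd^4*y - ba*bc*bd^4*y + bb*bc*bd^4*y + 6*ba*bd^5*y + bb*bd^5*y - 3*bc*bd^5*y + bd^6*y - ba^4*y^3 - ba^2*bb*bc*y^3 - 3*ba^3*bd*y^3 - ba*bb*bc*bd*y^3 - 4*ba^2*bd^2*y^3 - 3*ba*bd^3*y^3 - bd^4*y^3 + 4*ba^6 + ba^4*bb^2 - 3*ba^2*bb^4 - ba^4*bb*bc + ba^3*bb^2*bc - ba^2*bb^3*bc + ba*bb^4*bc + 7*ba^4*bc^2 - ba^3*bb*bc^2 - ba*bb^3*bc^2 - ba^2*bb*bc^3 + ba*bb^2*bc^3 + 3*ba^2*bc^4 - ba*bb*bc^4 + 10*ba^5*bd + 7*ba^3*bb^2*bd - 3*ba*bb^4*bd + ba^4*bc*bd + 3*ba^3*bb*bc*bd - 4*ba^2*bb^2*bc*bd + 3*ba*bb^3*bc*bd - 5*bb^4*bc*bd + 15*ba^3*bc^2*bd - ba^2*bb*bc^2*bd + 2*ba*bb^2*bc^2*bd - bb^3*bc^2*bd + ba^2*bc^3*bd + 3*ba*bb*bc^3*bd - 5*bb^2*bc^3*bd + 5*ba*bc^4*bd - bb*bc^4*bd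 + 6*ba^4*bd^2 + 6*ba^3*bb*bd^2 - ba^2*bb^2*bd^2 + 6*ba*bb^3*bd^2 + 2*ba^3*bc*bd^2 + 3*ba*bb^2*bc*bd^2 + bb^3*bc*bd^2 + 7*ba^2*bc^2*bd^2 + 5*ba*bb*bc^2*bd^2 + 2*bb^2*bc^2*bd^2 + 2*ba*bc^3*bd^2 + bb*bc^3*bd^2 + 2*bc^4*bd^2 + 10*ba^3*bd^3 - 3*ba*bb^2*bd^3 + 2*ba^2*bc*bd^3 + 3*ba*bb*bc*bd^3 - 4*bb^2*bc*bd^3 + 5*ba*bc^2*bd^3 - bb*bc^2*bd^3 + bc^3*bd^3 + 3*ba^2*bd^4 + 6*ba*bb*bd^4 + bb^2*bd^4 + 2*ba*bc*bd^4 + bb*bc*bd^4 + 3*bc^2*bd^4 + bc*bd^5 + bd^6 + ba^3*bc*y^2 - 2*ba^2*bb*bc*y^2 + ba*bb^2*bc*y^2 + ba^3*bd*y^2 + ba^2*bb*bd*y^2 - 3*ba*bb*bc*bd*y^2 + bb^2*bc*bd*y^2 - ba*bb*bd^2*y^2 - 3*bb*bc*bd^2*y^2 + ba*bd^3*y^2 - 2*bb*bd^3*y^2 + bc*bd^3*y^2 + 4*ba^4*y - ba^3*bb*y + ba^2*bb^2*y + 2*ba^3*bc*y + 3*ba^2*bb*bc*y + ba*bb^2*bc*y + 2*ba^2*bc^2*y + bb^2*bc^2*y + 7*ba^3*bd*y - 4*ba^2*bb*bd*y - 3*ba*bb^2*bd*y + 4*ba^2*bc*bd*y + 5*ba*bb*bc*bd*y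 - 3*bb^2*bc*bd*y + ba*bc^2*bd*y + 3*bb*bc^2*bd*y + 11*ba^2*bd^2*y + 2*ba*bb*bd^2*y - 4*bb^2*bd^2*y - 3*ba*bc*bd^2*y + 3*bb*bc*bd^2*y - bc^2*bd^2*y + 9*ba*bd^3*y + bb*bd^3*y - 2*bc*bd^3*y + bd^4*y + ba^2*y^3 + 2*ba*bd*y^3 + bd^2*y^3 + 4*ba^4 - 2*ba^3*bb - 2*ba*bb^3 + ba^3*bc + 7*ba^2*bb*bc - 2*ba*bb^2*bc - 2*bb^3*bc + 2*ba^2*bc^2 + 4*bb^2*bc^2 + ba*bc^3 - bb*bc^3 + 6*ba^3*bd + ba^2*bb*bd + 3*ba*bb^2*bd - 2*bb^3*bd - ba^2*bc*bd + 6*ba*bb*bc*bd - 3*bb^2*bc*bd + 6*ba*bc^2*bd + bb*bc^2*bd + bc^3*bd + 5*ba^2*bd^2 + 2*ba*bb*bd^2 + bb^2*bd^2 - 2*ba*bc*bd^2 + 4*bb*bc*bd^2 + 3*bc^2*bd^2 + 5*ba*bd^3 - 2*bb*bd^3 + bc*bd^3 + 3*bd^4 + ba^2*y^2 + 2*ba*bd*y^2 + bd^2*y^2 - 4*ba^2*y - 8*ba*bd*y - 4*bd^2*y - 4*ba^2 - bb*bc - 7*ba*bd - 4*bd^2 + 1) * (ba*bd - bb*bc - 1)"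
  unfolding relE0_def relE1_def relE2_def relE3_def by algebra

lemma certI2:
  fixes y ba bb bc bd :: real
  shows "1 * ((ba+bd)^4 - 3*(ba+bd)^2 - (ba+bd)*muE00 y ba bb bc bd + 1) = (0 - ba^4*bd^2*y^3 - 2*ba^3*bd^3*y^3 - ba^2*bd^4*y^3 + ba^4*bb*bd*y^2 + ba^3*bb^2*bd*y^2 + ba^4*bc*bd*y^2 + ba^4*bd^2*y^2 + ba^3*bb*bd^2*y^2 + ba^2*bb^2*bd^2*y^2 + ba^3*bc*bd^2*y^2 + 2*ba^3*bd^3*y^2 - ba^2*bc*bd^3*y^2 + ba^2*bd^4*y^2 - ba*bc*bd^4*y^2 + 2*ba^4*bb^2*y + ba^3*bb^3*y - 2*ba^4*bb*bc*y - ba^3*bb^2*bc*y + 3*ba^5*bd*y + 2*ba^4*bb*bd*y + 3*ba^3*bb^2*bd*y + ba^2*bb^3*bd*y - 4*ba^3*bb*bc*bd*y + ba^2*bb^2*bc*bd*y + ba*bb^3*bc*bd*y + ba^3*bc^2*bd*y + 8*ba^4*bd^2*y + 2*ba^3*bb*bd^2*y + ba^3*bc*bd^2*y - ba^2*bb*bc*bd^2*y + ba*bb^2*bc*bd^2*y + 2*ba^2*bc^2*bd^2*y + 5*ba^3*bd^3*y + ba^2*bb*bd^3*y + 2*ba^2*bc*bd^3*y + ba*bb*bc*bd^3*y + ba*bc^2*bd^3*y + ba*bc*bd^4*y + ba^3*bd*y^3 + 3*ba^2*bd^2*y^3 + 2*ba*bd^3*y^3 - 2*ba^3*bb*y^2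 - ba^2*bb^2*y^2 - ba^3*bd*y^2 - 3*ba^2*bb*bd*y^2 - ba*bb^2*bd*y^2 - ba^2*bc*bd*y^2 - 3*ba^2*bd^2*y^2 - ba*bb*bd^2*y^2 - 2*ba*bd^3*y^2 + bc*bd^3*y^2 - 2*ba^4*y - ba^2*bb^2*y + 3*ba^2*bb*bc*y + ba*bb^2*bc*y - 12*ba^3*bd*y + 3*ba*bb*bc*bd*y - bb^2*bc*bd*y - ba*bc^2*bd*y - 13*ba^2*bd^2*y + ba*bb*bd^2*y - ba*bc*bd^2*y - bb*bc*bd^2*y - bc^2*bd^2*y - 2*ba*bd^3*y - bc*bd^3*y - ba*bd*y^3 - bd^2*y^3 - ba^4 - 2*ba^2*bb*bc - ba*bb^2*bc - 2*bb^2*bc^2 - 4*ba^3*bd - ba^2*bc*bd - bb*bc^2*bd - 2*ba^2*bd^2 + ba*bb*y^2 + ba*bd*y^2 + bb*bd*y^2 + bd^2*y^2 + 3*ba^2*y - bb*bc*y + 7*ba*bd*y - 2*bb*bd*y + 2*bd^2*y + 2*ba^2 + 2*ba*bd - y) * relE0 y ba bb bc bd + (ba^4*bd^2*y^2 + 2*ba^3*bd^3*y^2 + ba^2*bd^4*y^2 - ba^4*bb*bd*y - ba^3*bb^2*bd*y - ba^4*bc*bd*y - ba^4*bd^2*y - ba^3*bb*bd^2*y - ba^2*bb^2*bd^2*y - ba^3*bc*bd^2*y - 2*ba^3*bd^3*y + ba^2*bc*bd^3*y - ba^2*bd^4*y + ba*bc*bd^4*y - 2*ba^4*bb^2 - ba^3*bb^3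 + 2*ba^4*bb*bc + ba^3*bb^2*bc - 3*ba^5*bd - 2*ba^4*bb*bd - 3*ba^3*bb^2*bd - ba^2*bb^3*bd + 4*ba^3*bb*bc*bd - ba^2*bb^2*bc*bd - ba*bb^3*bc*bd - ba^3*bc^2*bd - 8*ba^4*bd^2 - 2*ba^3*bb*bd^2 - ba^3*bc*bd^2 + ba^2*bb*bc*bd^2 - ba*bb^2*bc*bd^2 - 2*ba^2*bc^2*bd^2 - 5*ba^3*bd^3 - ba^2*bb*bd^3 - 2*ba^2*bc*bd^3 - ba*bb*bc*bd^3 - ba*bc^2*bd^3 - ba*bc*bd^4 - ba^3*bd*y^2 - 3*ba^2*bd^2*y^2 - 2*ba*bd^3*y^2 + 2*ba^3*bb*y + ba^2*bb^2*y + ba^3*bd*y + 3*ba^2*bb*bd*y + ba*bb^2*bd*y + ba^2*bc*bd*y + 3*ba^2*bd^2*y + ba*bb*bd^2*y + 2*ba*bd^3*y - bc*bd^3*y + 2*ba^4 + ba^2*bb^2 - 3*ba^2*bb*bc - ba*bb^2*bc + 12*ba^3*bd - ba^2*bc*bd - 3*ba*bb*bc*bd + bb^2*bc*bd + ba*bc^2*bd + 13*ba^2*bd^2 - ba*bb*bd^2 + bb*bc*bd^2 + bc^2*bd^2 + 2*ba*bd^3 + bc*bd^3 + ba*bd*y^2 + bd^2*y^2 - ba*bb*y - ba*bd*y - bb*bd*y - bd^2*y - 3*ba^2 + bb*bc - 7*ba*bd + 2*bb*bd + bc*bd - 2*bd^2 + 1) * relE1 y ba bb bc bd + (0 - ba^4*bd^2*y^2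 - 2*ba^3*bd^3*y^2 - ba^2*bd^4*y^2 + ba^4*bb*bd*y + ba^3*bb^2*bd*y + ba^4*bc*bd*y + ba^4*bd^2*y + ba^3*bb*bd^2*y + ba^2*bb^2*bd^2*y + ba^3*bc*bd^2*y + 2*ba^3*bd^3*y - ba^2*bc*bd^3*y + ba^2*bd^4*y - ba*bc*bd^4*y + 2*ba^4*bb^2 + ba^3*bb^3 - 2*ba^4*bb*bc - ba^3*bb^2*bc + 3*ba^5*bd + 2*ba^4*bb*bd + 3*ba^3*bb^2*bd + ba^2*bb^3*bd - 4*ba^3*bb*bc*bd + ba^2*bb^2*bc*bd + ba*bb^3*bc*bd + ba^3*bc^2*bd + 8*ba^4*bd^2 + 2*ba^3*bb*bd^2 + ba^3*bc*bd^2 - ba^2*bb*bc*bd^2 + ba*bb^2*bc*bd^2 + 2*ba^2*bc^2*bd^2 + 5*ba^3*bd^3 + ba^2*bb*bd^3 + 2*ba^2*bc*bd^3 + ba*bb*bc*bd^3 + ba*bc^2*bd^3 + ba*bc*bd^4 + ba^3*bd*y^2 + 3*ba^2*bd^2*y^2 + 2*ba*bd^3*y^2 - 2*ba^3*bb*y - ba^2*bb^2*y - ba^3*bd*y - 2*ba^2*bb*bd*y - ba*bb^2*bd*y - ba^2*bc*bd*y - 3*ba^2*bd^2*y - 2*ba*bd^3*y + bc*bd^3*y - 2*ba^4 - ba^3*bb - 3*ba^2*bb^2 - ba*bb^3 + 3*ba^2*bb*bc - 12*ba^3*bd - 6*ba^2*bb*bd - 2*ba*bb^2*bd + 3*ba*bb*bc*bd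 - 3*bb^2*bc*bd - ba*bc^2*bd - 13*ba^2*bd^2 - 2*ba*bb*bd^2 - ba*bc*bd^2 - bb*bc*bd^2 - bc^2*bd^2 - 2*ba*bd^3 - bc*bd^3 - ba*bd*y^2 - bd^2*y^2 + ba*bb*y + ba*bd*y + bd^2*y + 3*ba^2 + bb^2 - bb*bc + 7*ba*bd + bb*bd + 2*bd^2 - 1) * relE2 y ba bb bc bd + (0 - ba^3*bd*y - ba^2*bd^2*y + 2*ba^3*bb + ba^2*bb^2 + ba^3*bd + ba^2*bb*bd - ba^2*bc*bd - ba*bc*bd^2 - ba*bd^3 + ba*bd*y - ba*bb - ba*bd + bc*bd + bd^2) * relE3 y ba bb bc bd + (ba^5*bd^3*y^4 + 2*ba^4*bd^4*y^4 + ba^3*bd^5*y^4 - ba^4*bb^2*bd^2*y^3 - 2*ba^5*bc*bd^2*y^3 + ba^4*bb*bc*bd^2*y^3 - 2*ba^5*bd^3*y^3 - ba^3*bb^2*bd^3*y^3 - 2*ba^4*bc*bd^3*y^3 + 2*ba^3*bb*bc*bd^3*y^3 - 4*ba^4*bd^4*y^3 - ba^3*bb*bd^4*y^3 + 2*ba^3*bc*bd^4*y^3 + ba^2*bb*bc*bd^4*y^3 - 2*ba^3*bd^5*y^3 - ba^2*bb*bd^5*y^3 + 2*ba^2*bc*bd^5*y^3 - 3*ba^5*bb^2*bd*y^2 - 2*ba^4*bb^3*bd*y^2 + 2*ba^5*bb*bc*bd*y^2 + ba^4*bb^2*bc*bd*y^2 - ba^3*bb^3*bc*bd*y^2 + ba^5*bc^2*bd*y^2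 - ba^4*bb*bc^2*bd*y^2 - 4*ba^6*bd^2*y^2 - 2*ba^5*bb*bd^2*y^2 - 3*ba^4*bb^2*bd^2*y^2 - ba^3*bb^3*bd^2*y^2 + 2*ba^5*bc*bd^2*y^2 + 3*ba^4*bb*bc*bd^2*y^2 - 2*ba^3*bb^2*bc*bd^2*y^2 - 2*ba^2*bb^3*bc*bd^2*y^2 - 2*ba^4*bc^2*bd^2*y^2 - ba^3*bb*bc^2*bd^2*y^2 - 9*ba^5*bd^3*y^2 - 2*ba^4*bb*bd^3*y^2 + ba^2*bb^3*bd^3*y^2 + ba^4*bc*bd^3*y^2 - 2*ba^2*bb^2*bc*bd^3*y^2 - 6*ba^3*bc^2*bd^3*y^2 + ba^2*bb*bc^2*bd^3*y^2 - 5*ba^4*bd^4*y^2 - ba^2*bb^2*bd^4*y^2 - 4*ba^3*bc*bd^4*y^2 - 2*ba^2*bb*bc*bd^4*y^2 - 2*ba^2*bc^2*bd^4*y^2 + ba*bb*bc^2*bd^4*y^2 - ba^3*bd^5*y^2 + ba^2*bb*bd^5*y^2 - 3*ba^2*bc*bd^5*y^2 - ba*bb*bc*bd^5*y^2 + ba*bc^2*bd^5*y^2 - ba^2*bd^6*y^2 - ba^3*bd^3*y^4 - ba^2*bd^4*y^4 - 2*ba^5*bb^3*y - ba^4*bb^4*y + 4*ba^5*bb^2*bc*y - ba^3*bb^4*bc*y - 2*ba^5*bb*bc^2*y + ba^4*bb^2*bc^2*y + ba^3*bb^3*bc^2*y - 2*ba^6*bb*bd*y + ba^5*bb^2*bd*y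 + ba^4*bb^3*bd*y + ba^3*bb^4*bd*y + 4*ba^6*bc*bd*y - 3*ba^5*bb*bc*bd*y + ba^4*bb^2*bc*bd*y - 5*ba^3*bb^3*bc*bd*y - 2*ba^2*bb^4*bc*bd*y - 2*ba^4*bb*bc^2*bd*y + 7*ba^3*bb^2*bc^2*bd*y - ba*bb^4*bc^2*bd*y + 2*ba^4*bc^3*bd*y - ba^3*bb*bc^3*bd*y + 4*ba^6*bd^2*y - 2*ba^5*bb*bd^2*y + 5*ba^4*bb^2*bd^2*y + 5*ba^3*bb^3*bd^2*y + 2*ba^2*bb^4*bd^2*y + 6*ba^5*bc*bd^2*y - 13*ba^4*bb*bc*bd^2*y - 6*ba^3*bb^2*bc*bd^2*y + ba*bb^4*bc*bd^2*y + 3*ba^4*bc^2*bd^2*y + 2*ba^3*bb*bc^2*bd^2*y + 2*ba^2*bb^2*bc^2*bd^2*y - 2*ba*bb^3*bc^2*bd^2*y + 2*ba^3*bc^3*bd^2*y - 2*ba^2*bb*bc^3*bd^2*y + 10*ba^5*bd^3*y + 6*ba^4*bb*bd^3*y + 4*ba^3*bb^2*bd^3*y - 2*ba^4*bc*bd^3*y - 8*ba^3*bb*bc*bd^3*y - 3*ba^2*bb^2*bc*bd^3*y + ba*bb^3*bc*bd^3*y + 5*ba^3*bc^2*bd^3*y + ba^2*bb*bc^2*bd^3*y - 2*ba*bb^2*bc^2*bd^3*y - 2*ba^2*bc^3*bd^3*y - ba*bb*bc^3*bd^3*y + 7*ba^4*bd^4*y + 7*ba^3*bb*bd^4*y + 3*ba^2*bb^2*bd^4*y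 - 3*ba^3*bc*bd^4*y + ba^2*bb*bc*bd^4*y + ba^2*bc^2*bd^4*y - ba*bb*bc^2*bd^4*y - 2*ba*bc^3*bd^4*y + 2*ba^3*bd^5*y + ba*bb*bc*bd^5*y - ba*bc^2*bd^5*y + ba^2*bd^6*y - ba*bc*bd^6*y - ba^3*bb*bd^2*y^3 + 2*ba^3*bc*bd^2*y^3 - ba^2*bb*bc*bd^2*y^3 + 2*ba^3*bd^3*y^3 - ba*bb*bc*bd^3*y^3 + 2*ba^2*bd^4*y^3 + ba*bb*bd^4*y^3 - 2*ba*bc*bd^4*y^3 + 2*ba^6*bb^2 + ba^5*bb^3 + 2*ba^4*bb^4 + ba^3*bb^5 - 2*ba^6*bb*bc - ba^5*bb^2*bc - 2*ba^4*bb^3*bc - ba^3*bb^4*bc + 2*ba^4*bb^2*bc^2 + ba^3*bb^3*bc^2 - 2*ba^4*bb*bc^3 - ba^3*bb^2*bc^3 + 3*ba^7*bd + 2*ba^6*bb*bd + 6*ba^5*bb^2*bd + 3*ba^4*bb^3*bd + 3*ba^3*bb^4*bd + ba^2*bb^5*bd - 4*ba^5*bb*bc*bd + ba^4*bb^2*bc*bd - 3*ba^3*bb^3*bc*bd + ba^2*bb^4*bc*bd + ba*bb^5*bc*bd + 4*ba^5*bc^2*bd + 2*ba^4*bb*bc^2*bd + 4*ba^3*bb^2*bc^2*bd + ba^2*bb^3*bc^2*bd - 4*ba^3*bb*bc^3*bd + ba^2*bb^2*bc^3*bd + ba*bb^3*bc^3*bd + ba^3*bc^4*bd + 8*ba^6*bd^2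 + 2*ba^5*bb*bd^2 + 10*ba^4*bb^2*bd^2 + 3*ba^3*bb^3*bd^2 + ba^5*bc*bd^2 - 3*ba^4*bb*bc*bd^2 + ba^3*bb^2*bc*bd^2 - ba^2*bb^3*bc*bd^2 + ba*bb^4*bc*bd^2 + 10*ba^4*bc^2*bd^2 + 2*ba^3*bb*bc^2*bd^2 + 2*ba^2*bb^2*bc^2*bd^2 + ba^3*bc^3*bd^2 - ba^2*bb*bc^3*bd^2 + ba*bb^2*bc^3*bd^2 + 2*ba^2*bc^4*bd^2 + 8*ba^5*bd^3 + 3*ba^4*bb*bd^3 + 8*ba^3*bb^2*bd^3 + 2*ba^2*bb^3*bd^3 + 2*ba^4*bc*bd^3 - 3*ba^3*bb*bc*bd^3 + 3*ba^2*bb^2*bc*bd^3 + 2*ba*bb^3*bc*bd^3 + 7*ba^3*bc^2*bd^3 + ba^2*bb*bc^2*bd^3 + ba*bb^2*bc^2*bd^3 + 2*ba^2*bc^3*bd^3 + ba*bb*bc^3*bd^3 + ba*bc^4*bd^3 + 8*ba^4*bd^4 + 2*ba^3*bb*bd^4 + 2*ba^3*bc*bd^4 - ba^2*bb*bc*bd^4 + 2*ba*bb^2*bc*bd^4 + 2*ba^2*bc^2*bd^4 + ba*bc^3*bd^4 + 5*ba^3*bd^5 + ba^2*bb*bd^5 + 2*ba^2*bc*bd^5 + ba*bb*bc*bd^5 + ba*bc^2*bd^5 + ba*bc*bd^6 + ba^3*bb^2*bd*y^2 - 2*ba^3*bb*bc*bd*y^2 - ba^3*bc^2*bd*y^2 +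 ba^2*bb*bc^2*bd*y^2 + 5*ba^4*bd^2*y^2 + 4*ba^3*bb*bd^2*y^2 + 2*ba^2*bb^2*bd^2*y^2 - 2*ba^3*bc*bd^2*y^2 - 3*ba^2*bb*bc*bd^2*y^2 + 2*ba*bb^2*bc*bd^2*y^2 + 3*ba^2*bc^2*bd^2*y^2 + 6*ba^3*bd^3*y^2 + ba^2*bb*bd^3*y^2 + ba*bb^2*bd^3*y^2 + ba^2*bc*bd^3*y^2 + ba*bb*bc*bd^3*y^2 + 3*ba*bc^2*bd^3*y^2 - bb*bc^2*bd^3*y^2 + ba^2*bd^4*y^2 - ba*bb*bd^4*y^2 + 3*ba*bc*bd^4*y^2 + bb*bc*bd^4*y^2 - bc^2*bd^4*y^2 + ba*bd^5*y^2 + ba^3*bb^3*y - 2*ba^5*bc*y - 4*ba^3*bb^2*bc*y + ba^2*bb^3*bc*y + 2*ba^3*bb*bc^2*y - 3*ba^2*bb^2*bc^2*y + ba*bb^2*bc^3*y + 4*ba^4*bb*bd*y + 4*ba^3*bb^2*bd*y - 8*ba^4*bc*bd*y + 4*ba^3*bb*bc*bd*y - ba^2*bb^2*bc*bd*y + 2*ba*bb^3*bc*bd*y + ba^3*bc^2*bd*y - ba^2*bb*bc^2*bd*y - 5*ba*bb^2*bc^2*bd*y + 2*bb^3*bc^2*bd*y - 2*ba^2*bc^3*bd*y + 2*ba*bb*bc^3*bd*y + bb^2*bc^3*bd*y - 5*ba^4*bd^2*y + 2*ba^3*bb*bd^2*y + ba^2*bb^2*bd^2*y - ba*bb^3*bd^2*y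 - 3*ba^3*bc*bd^2*y + 11*ba^2*bb*bc*bd^2*y - 3*bb^3*bc*bd^2*y - 2*ba^2*bc^2*bd^2*y - 4*ba*bb*bc^2*bd^2*y + 2*bb^2*bc^2*bd^2*y + 2*bb*bc^3*bd^2*y - 6*ba^3*bd^3*y - 3*ba^2*bb*bd^3*y + ba*bb^2*bd^3*y + 4*ba^2*bc*bd^3*y - bb^2*bc*bd^3*y - 2*ba*bc^2*bd^3*y + 2*bc^3*bd^3*y - 2*ba*bb*bd^4*y + ba*bc*bd^4*y - bb*bc*bd^4*y + bc^2*bd^4*y - ba*bd^5*y - bb*bd^5*y + bc*bd^5*y - 2*ba^6 - ba^4*bb^2 + 2*ba^3*bb^3 - ba^2*bb^4 + ba^4*bb*bc + 3*ba^2*bb^3*bc - ba*bb^4*bc - 2*ba^4*bc^2 + 2*ba^2*bb^2*bc^2 + 4*ba^2*bb*bc^3 + 2*bb^3*bc^3 - 6*ba^5*bd - 3*ba^4*bb*bd - 5*ba^3*bb^2*bd + 2*ba^2*bb^3*bd - ba*bb^4*bd + ba^4*bc*bd - ba^3*bb*bc*bd + 3*ba*bb^3*bc*bd - 3*bb^4*bc*bd - 10*ba^3*bc^2*bd - ba^2*bb*bc^2*bd - ba*bb^2*bc^2*bd - 2*bb^3*bc^2*bd + ba^2*bc^3*bd + 5*ba*bb*bc^3*bd - ba*bc^4*bd - 7*ba^4*bd^2 - ba^3*bb*bd^2 - 8*ba^2*bb^2*bd^2 + 2*ba*bb^3*bd^2 - ba^3*bc*bd^2 + 2*ba*bb^2*bc*bd^2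 - bb^3*bc*bd^2 - 11*ba^2*bc^2*bd^2 - ba*bb*bc^2*bd^2 - bb^2*bc^2*bd^2 + ba*bc^3*bd^2 + bb*bc^3*bd^2 - bc^4*bd^2 - 6*ba^3*bd^3 - 4*ba*bb^2*bd^3 - 2*ba^2*bc*bd^3 + 3*ba*bb*bc*bd^3 - 4*bb^2*bc*bd^3 - 4*ba*bc^2*bd^3 - 7*ba^2*bd^4 + 2*ba*bb*bd^4 - bb^2*bd^4 - ba*bc*bd^4 - 2*bb*bc*bd^4 - bc^2*bd^4 - 2*ba*bd^5 - bc*bd^5 - bd^6 + ba*bb*bc*bd*y^2 - ba^2*bd^2*y^2 + ba*bb^2*bc*y - ba*bb*bc^2*y + bb^2*bc^2*y - ba^2*bb*bd*y + ba^2*bc*bd*y - 2*ba*bb*bc*bd*y - bb^2*bc*bd*y + bb*bc^2*bd*y + ba^2*bd^2*y + ba*bb*bd^2*y - ba*bc*bd^2*y - ba^4 - 4*ba^2*bb*bc - bb^3*bc - bb^2*bc^2 - bb*bc^3 + ba*bb^2*bd - 4*ba*bb*bc*bd + ba*bc^2*bd - ba^2*bd^2 - 4*bb*bc*bd^2 - bd^4 + 3*ba^2 + bb*bc + 5*ba*bd + 3*bd^2 - 1) * (ba*bd - bb*bc - 1)"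
  unfolding relE0_def relE1_def relE2_def relE3_def muE00_def by algebra

lemma certI3:
  fixes y ba bb bc bd :: real
  shows "1 * ((y+1)*(ba+bd)^4 - y^2*(ba+bd)^2 - 2*(y+1)*(ba+bd)^2 + (y+1)*(ba+bd)*muE10 y ba bb bc bd + 1) = (0 - 4*ba^4*bc*bd*y^3 + ba^4*bd^2*y^3 - 4*ba^3*bc*bd^2*y^3 - ba^3*bd^3*y^3 - 2*ba^2*bd^4*y^3 - 4*ba^4*bb*bc*y^2 + 4*ba^4*bc^2*y^2 - 2*ba^5*bd*y^2 - ba^4*bb*bd*y^2 + 3*ba^4*bc*bd*y^2 - 5*ba^4*bd^2*y^2 - 2*ba^3*bb*bd^2*y^2 + 4*ba^3*bc*bd^2*y^2 + 4*ba^2*bb*bc*bd^2*y^2 - 4*ba^2*bc^2*bd^2*y^2 + ba^3*bd^3*y^2 + ba^2*bb*bd^3*y^2 - ba^2*bc*bd^3*y^2 + 4*ba^2*bd^4*y^2 + 2*ba*bb*bd^4*y^2 - 2*ba*bc*bd^4*y^2 - 2*ba^5*bb*y - 2*ba^4*bb^2*y + 4*ba^5*bc*y + 6*ba^4*bb*bc*y + 4*ba^3*bb^2*bc*y - 8*ba^3*bb*bc^2*y + 4*ba^3*bc^3*y - 3*ba^5*bd*y - 5*ba^4*bb*bd*y - ba^3*bb^2*bd*y + 10*ba^4*bc*bd*y + 5*ba^3*bb*bc*bd*y + 2*ba^2*bb^2*bc*bd*y + 3*ba^3*bc^2*bd*y + 4*ba*bb^2*bc^2*bd*y + 4*ba^2*bc^3*bd*y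 - 4*ba^4*bd^2*y + 3*ba^3*bb*bd^2*y + 3*ba^2*bb^2*bd^2*y - ba^3*bc*bd^2*y - 14*ba^2*bb*bc*bd^2*y + ba*bb^2*bc*bd^2*y + 3*ba^2*bc^2*bd^2*y - 2*ba*bb*bc^2*bd^2*y + 9*ba^3*bd^3*y + 3*ba^2*bb*bd^3*y + 2*ba*bb^2*bd^3*y + 7*ba^2*bc*bd^3*y + 2*ba*bb*bc*bd^3*y + 2*bb^2*bc*bd^3*y + ba^2*bd^4*y - 2*ba*bb*bd^4*y + 4*ba*bc*bd^4*y + 2*ba*bd^5*y + 4*ba^3*bc*y^3 - 2*ba^3*bd*y^3 + 4*ba^2*bc*bd*y^3 + ba^2*bd^2*y^3 + 3*ba*bd^3*y^3 + 2*ba^4*y^2 + ba^3*bb*y^2 - 3*ba^3*bc*y^2 - 4*ba^2*bb*bc*y^2 + 6*ba^3*bd*y^2 + ba^2*bb*bd*y^2 - ba^2*bc*bd*y^2 - 4*ba*bb*bc*bd*y^2 - ba^2*bd^2*y^2 - 2*ba*bb*bd^2*y^2 + 3*ba*bc*bd^2*y^2 - 5*ba*bd^3*y^2 - 2*bb*bd^3*y^2 + bc*bd^3*y^2 + 3*ba^4*y + ba^3*bb*y - 13*ba^3*bc*y - 7*ba^2*bb*bc*y + ba^2*bc^2*y + 7*ba*bb*bc^2*y + bb^2*bc^2*y + 2*bb*bc^3*y + 12*ba^3*bd*y + 2*ba^2*bb*bd*y - 10*ba^2*bc*bd*y - 6*ba*bb*bc*bd*y - 2*ba*bc^2*bd*y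 - 2*bb*bc^2*bd*y - 5*ba^2*bd^2*y + 3*ba*bb*bd^2*y + 3*bb*bc*bd^2*y - bc^2*bd^2*y - 11*ba*bd^3*y + bb*bd^3*y - 2*bd^4*y + ba^2*y^3 - bd^2*y^3 - ba^3*bc + ba^2*bb*bc + ba*bb^2*bc - 4*ba^2*bc^2 + 5*ba*bb*bc^2 - 7*bb^2*bc^2 + 6*bb*bc^3 + 3*ba^3*bd - 2*ba^2*bc*bd + 2*ba*bb*bc*bd - 2*ba*bc^2*bd - 2*bb*bc^2*bd - ba^2*bd^2 - ba*bc*bd^2 - bb*bc*bd^2 + ba*bd^3 + bc*bd^3 - ba^2*y^2 - 2*ba*bc*y^2 - 2*bc*bd*y^2 + bd^2*y^2 - 9*ba^2*y - 4*ba*bb*y + 3*ba*bc*y - 5*bb*bc*y + 2*bc^2*y - 2*ba*bd*y - 4*bb*bd*y - 4*bc*bd*y + 8*bd^2*y - 3*ba^2 + 7*ba*bc + 3*bb*bc + 4*bc^2 - 6*ba*bd - bc*bd - 5*y + 7) * relE0 y ba bb bc bd + (4*ba^4*bc*bd*y^2 - ba^4*bd^2*y^2 + 4*ba^3*bc*bd^2*y^2 + ba^3*bd^3*y^2 + 2*ba^2*bd^4*y^2 + 4*ba^4*bb*bc*y - 4*ba^4*bc^2*y + 2*ba^5*bd*y + ba^4*bb*bd*y - 3*ba^4*bc*bd*y + 5*ba^4*bd^2*y + 2*ba^3*bb*bd^2*y - 4*ba^3*bc*bd^2*y - 4*ba^2*bb*bc*bd^2*y + 4*ba^2*bc^2*bd^2*y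 - ba^3*bd^3*y - ba^2*bb*bd^3*y + ba^2*bc*bd^3*y - 4*ba^2*bd^4*y - 2*ba*bb*bd^4*y + 2*ba*bc*bd^4*y + 2*ba^5*bb + 2*ba^4*bb^2 - 4*ba^5*bc - 6*ba^4*bb*bc - 4*ba^3*bb^2*bc + 8*ba^3*bb*bc^2 - 4*ba^3*bc^3 + 3*ba^5*bd + 5*ba^4*bb*bd + ba^3*bb^2*bd - 10*ba^4*bc*bd - 5*ba^3*bb*bc*bd - 2*ba^2*bb^2*bc*bd - 3*ba^3*bc^2*bd - 4*ba*bb^2*bc^2*bd - 4*ba^2*bc^3*bd + 4*ba^4*bd^2 - 3*ba^3*bb*bd^2 - 3*ba^2*bb^2*bd^2 + ba^3*bc*bd^2 + 14*ba^2*bb*bc*bd^2 - ba*bb^2*bc*bd^2 - 3*ba^2*bc^2*bd^2 + 2*ba*bb*bc^2*bd^2 - 9*ba^3*bd^3 - 3*ba^2*bb*bd^3 - 2*ba*bb^2*bd^3 - 7*ba^2*bc*bd^3 - 2*ba*bb*bc*bd^3 - 2*bb^2*bc*bd^3 - ba^2*bd^4 + 2*ba*bb*bd^4 - 4*ba*bc*bd^4 - 2*ba*bd^5 - 4*ba^3*bc*y^2 + 2*ba^3*bd*y^2 - 4*ba^2*bc*bd*y^2 - ba^2*bd^2*y^2 - 3*ba*bd^3*y^2 - 2*ba^4*y - ba^3*bb*y + 3*ba^3*bc*y + 4*ba^2*bb*bc*y - 6*ba^3*bd*y - ba^2*bb*bd*y + ba^2*bc*bd*y + 4*ba*bb*bc*bd*y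 + ba^2*bd^2*y + 2*ba*bb*bd^2*y - 3*ba*bc*bd^2*y + 5*ba*bd^3*y + 2*bb*bd^3*y - bc*bd^3*y - 3*ba^4 - ba^3*bb + 13*ba^3*bc + 7*ba^2*bb*bc - 3*ba^2*bc^2 - 4*ba*bb*bc^2 - 12*ba^3*bd - 2*ba^2*bb*bd + 11*ba^2*bc*bd + 6*ba*bb*bc*bd + 2*ba*bc^2*bd + 2*bb*bc^2*bd + 5*ba^2*bd^2 - 3*ba*bb*bd^2 - ba*bc*bd^2 - 3*bb*bc*bd^2 + bc^2*bd^2 + 11*ba*bd^3 - bb*bd^3 + bc*bd^3 + 2*bd^4 - ba^2*y^2 + bd^2*y^2 + ba^2*y + 2*ba*bc*y + 2*bc*bd*y - bd^2*y + 9*ba^2 + 4*ba*bb - 4*ba*bc + 5*bb*bc - 2*bc^2 + 2*ba*bd + 4*bb*bd + 5*bc*bd - 8*bd^2 + 5) * relE1 y ba bb bc bd + (0 - 4*ba^4*bc*bd*y^2 + ba^4*bd^2*y^2 - 4*ba^3*bc*bd^2*y^2 - ba^3*bd^3*y^2 - 2*ba^2*bd^4*y^2 - 4*ba^4*bb*bc*y + 4*ba^4*bc^2*y - 2*ba^5*bd*y - ba^4*bb*bd*y + 3*ba^4*bc*bd*y - 5*ba^4*bd^2*y - 2*ba^3*bb*bd^2*y + 4*ba^3*bc*bd^2*y + 4*ba^2*bb*bc*bd^2*y - 4*ba^2*bc^2*bd^2*y + ba^3*bd^3*y + ba^2*bb*bd^3*y - ba^2*bc*bd^3*y + 4*ba^2*bd^4*y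 + 2*ba*bb*bd^4*y - 2*ba*bc*bd^4*y - 2*ba^5*bb - 2*ba^4*bb^2 + 4*ba^5*bc + 6*ba^4*bb*bc + 4*ba^3*bb^2*bc - 8*ba^3*bb*bc^2 + 4*ba^3*bc^3 - 3*ba^5*bd - 5*ba^4*bb*bd - ba^3*bb^2*bd + 10*ba^4*bc*bd + 5*ba^3*bb*bc*bd + 2*ba^2*bb^2*bc*bd + 3*ba^3*bc^2*bd + 4*ba*bb^2*bc^2*bd + 4*ba^2*bc^3*bd - 4*ba^4*bd^2 + 3*ba^3*bb*bd^2 + 3*ba^2*bb^2*bd^2 - ba^3*bc*bd^2 - 14*ba^2*bb*bc*bd^2 + ba*bb^2*bc*bd^2 + 3*ba^2*bc^2*bd^2 - 2*ba*bb*bc^2*bd^2 + 9*ba^3*bd^3 + 3*ba^2*bb*bd^3 + 2*ba*bb^2*bd^3 + 7*ba^2*bc*bd^3 + 2*ba*bb*bc*bd^3 + 2*bb^2*bc*bd^3 + ba^2*bd^4 - 2*ba*bb*bd^4 + 4*ba*bc*bd^4 + 2*ba*bd^5 + 4*ba^3*bc*y^2 - 2*ba^3*bd*y^2 + 4*ba^2*bc*bd*y^2 + ba^2*bd^2*y^2 + 3*ba*bd^3*y^2 + 2*ba^4*y + ba^3*bb*y - 3*ba^3*bc*y + ba^2*bb*bc*y + 6*ba^3*bd*y - ba^2*bc*bd*y - ba*bb*bc*bd*y + bb^2*bc*bd*y - ba^2*bd^2*y + 3*ba*bc*bd^2*y - 4*ba*bd^3*y - 2*bb*bd^3*y + bc*bd^3*y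 + bd^4*y + 3*ba^4 + 3*ba^3*bb + 2*ba^2*bb^2 - 14*ba^3*bc - 12*ba^2*bb*bc - 4*ba*bb^2*bc + bb^3*bc + ba^2*bc^2 + 6*ba*bb*bc^2 + 2*bb*bc^3 + 12*ba^3*bd + 8*ba^2*bb*bd - ba*bb^2*bd - 12*ba^2*bc*bd - 5*bb^2*bc*bd - 2*ba*bc^2*bd + 3*bb*bc^2*bd - 5*ba^2*bd^2 - 3*ba*bb*bd^2 - 2*bb^2*bd^2 - 2*ba*bc*bd^2 + 3*bb*bc*bd^2 - bc^2*bd^2 - 10*ba*bd^3 + bb*bd^3 - bc*bd^3 - bd^4 + ba^2*y^2 - bd^2*y^2 - ba^2*y + ba*bb*y - 2*ba*bc*y - bb*bd*y - 2*bc*bd*y + bd^2*y - 7*ba^2 - 6*ba*bb + 3*ba*bc - 4*bb*bc + 2*bc^2 - 2*ba*bd - 2*bb*bd - 2*bc*bd + 5*bd^2 - 2) * relE2 y ba bb bc bd + (0 - 4*ba^3*bc*y + ba^3*bd*y - 2*ba^2*bd^2*y - 2*ba^4 - 2*ba^3*bb + 4*ba^3*bc + 4*ba^2*bb*bc - 4*ba^2*bc^2 + bb^2*bc^2 - 3*ba^3*bd + ba^2*bb*bd - 5*ba^2*bc*bd + 5*ba^2*bd^2 + 2*ba*bb*bd^2 - 2*ba*bc*bd^2 - 2*ba*bd^3 - ba^2*y + ba*bd*y + ba^2 + ba*bc - 2*ba*bd + bc*bd + bd^2) * relE3 y ba bb bc bd + (4*ba^5*bc*bd^2*y^4 - ba^5*bd^3*y^4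 + 4*ba^4*bc*bd^3*y^4 + ba^4*bd^4*y^4 + 2*ba^3*bd^5*y^4 + 8*ba^5*bb*bc*bd*y^3 - 8*ba^5*bc^2*bd*y^3 + 4*ba^4*bb*bc^2*bd*y^3 + 2*ba^6*bd^2*y^3 - 6*ba^5*bc*bd^2*y^3 - ba^4*bb*bc*bd^2*y^3 + 4*ba^3*bb*bc^2*bd^2*y^3 + 6*ba^5*bd^3*y^3 + 4*ba^4*bb*bd^3*y^3 - 10*ba^4*bc*bd^3*y^3 - 7*ba^3*bb*bc*bd^3*y^3 + 8*ba^3*bc^2*bd^3*y^3 - 2*ba^4*bd^4*y^3 + 2*ba^2*bb*bc*bd^4*y^3 - 6*ba^3*bd^5*y^3 - 4*ba^2*bb*bd^5*y^3 + 4*ba^2*bc*bd^5*y^3 + 4*ba^5*bb^2*bc*y^2 - 8*ba^5*bb*bc^2*y^2 + 4*ba^4*bb^2*bc^2*y^2 + 4*ba^5*bc^3*y^2 - 4*ba^4*bb*bc^3*y^2 + 4*ba^6*bb*bd*y^2 + 3*ba^5*bb^2*bd*y^2 - 10*ba^6*bc*bd*y^2 - 12*ba^5*bb*bc*bd*y^2 - 11*ba^4*bb^2*bc*bd*y^2 + 7*ba^5*bc^2*bd*y^2 + 13*ba^4*bb*bc^2*bd*y^2 - 12*ba^4*bc^3*bd*y^2 + 2*ba^6*bd^2*y^2 + 7*ba^5*bb*bd^2*y^2 + 3*ba^4*bb^2*bd^2*y^2 - 14*ba^5*bc*bd^2*y^2 - 2*ba^4*bb*bc*bd^2*y^2 -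 8*ba^3*bb^2*bc*bd^2*y^2 - ba^4*bc^2*bd^2*y^2 + 4*ba^3*bb*bc^2*bd^2*y^2 - 8*ba^2*bb^2*bc^2*bd^2*y^2 - 12*ba^3*bc^3*bd^2*y^2 + 4*ba^2*bb*bc^3*bd^2*y^2 - 2*ba^5*bd^3*y^2 - 11*ba^4*bb*bd^3*y^2 - 7*ba^3*bb^2*bd^3*y^2 + 7*ba^4*bc*bd^3*y^2 + 25*ba^3*bb*bc*bd^3*y^2 + 2*ba^2*bb^2*bc*bd^3*y^2 - 13*ba^3*bc^2*bd^3*y^2 - 5*ba^2*bb*bc^2*bd^3*y^2 + 4*ba^2*bc^3*bd^3*y^2 - 9*ba^4*bd^4*y^2 - 5*ba^3*bb*bd^4*y^2 - 5*ba^2*bb^2*bd^4*y^2 - 9*ba^3*bc*bd^4*y^2 - 4*ba^2*bb*bc*bd^4*y^2 - 4*ba*bb^2*bc*bd^4*y^2 - 3*ba^2*bc^2*bd^4*y^2 + 2*ba*bb*bc^2*bd^4*y^2 + 2*ba^3*bd^5*y^2 + 8*ba^2*bb*bd^5*y^2 + 2*ba*bb^2*bd^5*y^2 - 10*ba^2*bc*bd^5*y^2 - 4*ba*bb*bc*bd^5*y^2 + 2*ba*bc^2*bd^5*y^2 - 4*ba^2*bd^6*y^2 + ba^4*bd^2*y^4 - ba^2*bd^4*y^4 + 2*ba^6*bb^2*y + 2*ba^5*bb^3*y - 10*ba^6*bb*bc*y - 6*ba^5*bb^2*bc*y - 6*ba^4*bb^3*bc*y + 8*ba^6*bc^2*y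 + 2*ba^5*bb*bc^2*y + 10*ba^4*bb^2*bc^2*y - 4*ba^3*bb^3*bc^2*y - 16*ba^4*bb*bc^3*y + 8*ba^3*bb^2*bc^3*y + 8*ba^4*bc^4*y - 4*ba^3*bb*bc^4*y - 2*ba^7*bd*y - ba^5*bb^2*bd*y - 2*ba^4*bb^3*bd*y + 4*ba^6*bc*bd*y + 14*ba^4*bb^2*bc*bd*y + 3*ba^3*bb^3*bc*bd*y + 4*ba^5*bc^2*bd*y - 23*ba^4*bb*bc^2*bd*y - 15*ba^3*bb^2*bc^2*bd*y - 6*ba^2*bb^3*bc^2*bd*y + 10*ba^4*bc^3*bd*y + 5*ba^3*bb*bc^3*bd*y + 4*ba^2*bb^2*bc^3*bd*y - 4*ba*bb^3*bc^3*bd*y - 4*ba^2*bb*bc^4*bd*y - 8*ba^6*bd^2*y - 6*ba^5*bb*bd^2*y - 14*ba^4*bb^2*bd^2*y - 6*ba^3*bb^3*bd^2*y + 13*ba^5*bc*bd^2*y + 28*ba^4*bb*bc*bd^2*y + 26*ba^3*bb^2*bc*bd^2*y + 2*ba^2*bb^3*bc*bd^2*y - 13*ba^4*bc^2*bd^2*y - 20*ba^3*bb*bc^2*bd^2*y + 15*ba^2*bb^2*bc^2*bd^2*y + 3*ba*bb^3*bc^2*bd^2*y + 8*ba^3*bc^3*bd^2*y + 3*ba^2*bb*bc^3*bd^2*y - 2*ba*bb^2*bc^3*bd^2*y - 8*ba^2*bc^4*bd^2*y - 5*ba^5*bd^3*y - 10*ba^4*bb*bd^3*y + 4*ba^3*bb^2*bd^3*y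 + 2*ba^2*bb^3*bd^3*y + 14*ba^4*bc*bd^3*y - 31*ba^3*bb*bc*bd^3*y - 20*ba^2*bb^2*bc*bd^3*y - 3*ba*bb^3*bc*bd^3*y + 12*ba^3*bc^2*bd^3*y + 11*ba^2*bb*bc^2*bd^3*y - 3*ba*bb^2*bc^2*bd^3*y - 2*bb^3*bc^2*bd^3*y - 4*ba^2*bc^3*bd^3*y + 2*ba*bb*bc^3*bd^3*y + 8*ba^4*bd^4*y + 11*ba^3*bb*bd^4*y + 11*ba^2*bb^2*bd^4*y + 4*ba*bb^3*bd^4*y + ba^3*bc*bd^4*y + 3*ba^2*bb*bc*bd^4*y + 2*ba*bb^2*bc*bd^4*y + 2*bb^3*bc*bd^4*y - 3*ba^2*bc^2*bd^4*y - 4*ba*bb*bc^2*bd^4*y - 2*bb^2*bc^2*bd^4*y - 2*ba*bc^3*bd^4*y + 2*ba^3*bd^5*y - 2*ba^2*bb*bd^5*y - 2*ba*bb^2*bd^5*y + 4*ba^2*bc*bd^5*y + 4*ba*bb*bc*bd^5*y - 4*ba*bc^2*bd^5*y + 6*ba^2*bd^6*y + 4*ba*bb*bd^6*y - 4*ba*bc*bd^6*y + 2*ba^4*bb*bd*y^3 - 2*ba^4*bc*bd*y^3 + ba^3*bb*bc*bd*y^3 - 2*ba^4*bd^2*y^3 - ba^3*bb*bd^2*y^3 - 2*ba^2*bb*bd^3*y^3 - ba*bb*bc*bd^3*y^3 + 2*ba^2*bd^4*y^3 + ba*bb*bd^4*y^3 - 2*ba*bc*bd^4*y^3 - 2*ba^7*bb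 - 2*ba^6*bb^2 - 2*ba^5*bb^3 - 2*ba^4*bb^4 + 4*ba^7*bc + 6*ba^6*bb*bc + 8*ba^5*bb^2*bc + 6*ba^4*bb^3*bc + 4*ba^3*bb^4*bc - 10*ba^5*bb*bc^2 - 2*ba^4*bb^2*bc^2 - 8*ba^3*bb^3*bc^2 + 8*ba^5*bc^3 + 6*ba^4*bb*bc^3 + 8*ba^3*bb^2*bc^3 - 8*ba^3*bb*bc^4 + 4*ba^3*bc^5 - 3*ba^7*bd - 5*ba^6*bb*bd - 4*ba^5*bb^2*bd - 5*ba^4*bb^3*bd - ba^3*bb^4*bd + 10*ba^6*bc*bd + 5*ba^5*bb*bc*bd + 12*ba^4*bb^2*bc*bd + 5*ba^3*bb^3*bc*bd + 2*ba^2*bb^4*bc*bd - 5*ba^4*bb*bc^2*bd + 6*ba^3*bb^2*bc^2*bd + 4*ba*bb^4*bc^2*bd + 14*ba^4*bc^3*bd + 5*ba^3*bb*bc^3*bd + 6*ba^2*bb^2*bc^3*bd + 3*ba^3*bc^4*bd + 4*ba*bb^2*bc^4*bd + 4*ba^2*bc^5*bd - 4*ba^6*bd^2 + ba^5*bb*bd^2 - 3*ba^4*bb^2*bd^2 + 3*ba^3*bb^3*bd^2 + 3*ba^2*bb^4*bd^2 + 3*ba^5*bc*bd^2 - 8*ba^4*bb*bc*bd^2 + 4*ba^3*bb^2*bc*bd^2 - 14*ba^2*bb^3*bc*bd^2 + ba*bb^4*bc*bd^2 - ba^4*bc^2*bd^2 - 7*ba^3*bb*bc^2*bd^2 + 6*ba^2*bb^2*bc^2*bd^2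 - 2*ba*bb^3*bc^2*bd^2 + 3*ba^3*bc^3*bd^2 - 14*ba^2*bb*bc^3*bd^2 + ba*bb^2*bc^3*bd^2 + 3*ba^2*bc^4*bd^2 - 2*ba*bb*bc^4*bd^2 + 6*ba^5*bd^3 - 2*ba^4*bb*bd^3 + 10*ba^3*bb^2*bd^3 + 3*ba^2*bb^3*bd^3 + 2*ba*bb^4*bd^3 + 17*ba^4*bc*bd^3 + 7*ba^3*bb*bc*bd^3 + 11*ba^2*bb^2*bc*bd^3 + 2*ba*bb^3*bc*bd^3 + 2*bb^4*bc*bd^3 + 12*ba^3*bc^2*bd^3 + 3*ba^2*bb*bc^2*bd^3 + 6*ba*bb^2*bc^2*bd^3 + 11*ba^2*bc^3*bd^3 + 2*ba*bb*bc^3*bd^3 + 2*bb^2*bc^3*bd^3 - 3*ba^4*bd^4 + ba^3*bb*bd^4 + 4*ba^2*bb^2*bd^4 - 2*ba*bb^3*bd^4 + 3*ba^3*bc*bd^4 - 14*ba^2*bb*bc*bd^4 + 5*ba*bb^2*bc*bd^4 + 4*ba^2*bc^2*bd^4 - 4*ba*bb*bc^2*bd^4 + 4*ba*bc^3*bd^4 + 11*ba^3*bd^5 + 3*ba^2*bb*bd^5 + 4*ba*bb^2*bd^5 + 7*ba^2*bc*bd^5 + 2*ba*bb*bc*bd^5 + 2*bb^2*bc*bd^5 + 2*ba*bc^2*bd^5 + ba^2*bd^6 - 2*ba*bb*bd^6 + 4*ba*bc*bd^6 + 2*ba*bd^7 + ba^4*bb^2*y^2 + 2*ba^5*bc*y^2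 - 2*ba^4*bb*bc*y^2 + ba^3*bb^2*bc*y^2 + ba^4*bc^2*y^2 + ba^3*bb*bc^2*y^2 + ba^2*bb^2*bc^2*y^2 - 2*ba^5*bd*y^2 - 3*ba^4*bb*bd*y^2 - 2*ba^3*bb^2*bd*y^2 + 7*ba^4*bc*bd*y^2 + ba^3*bb*bc*bd*y^2 + 3*ba^2*bb^2*bc*bd*y^2 + 2*ba^3*bc^2*bd*y^2 + ba^2*bb*bc^2*bd*y^2 + 2*ba*bb^2*bc^2*bd*y^2 + 2*ba*bb*bc^3*bd*y^2 - 6*ba^4*bd^2*y^2 - 4*ba^3*bb*bd^2*y^2 - ba^2*bb^2*bd^2*y^2 + 2*ba^3*bc*bd^2*y^2 + 4*ba^2*bb*bc*bd^2*y^2 - ba*bb^2*bc*bd^2*y^2 + 4*ba^2*bc^2*bd^2*y^2 + 5*ba*bb*bc^2*bd^2*y^2 + bb^2*bc^2*bd^2*y^2 + 4*bb*bc^3*bd^2*y^2 - 4*ba^3*bd^3*y^2 - 3*ba^2*bb*bd^3*y^2 + 2*ba*bb^2*bd^3*y^2 - 7*ba^2*bc*bd^3*y^2 - 2*ba*bb*bc*bd^3*y^2 - 3*bb^2*bc*bd^3*y^2 - 2*bb*bc^2*bd^3*y^2 + 7*ba^2*bd^4*y^2 - 2*ba*bb*bd^4*y^2 + 3*ba*bc*bd^4*y^2 + 3*bb*bc*bd^4*y^2 - bc^2*bd^4*y^2 + ba*bd^5*y^2 + 2*ba^6*y - 2*ba^5*bb*y - ba^4*bb^2*y - ba^3*bb^3*y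 + 4*ba^5*bc*y + 3*ba^4*bb*bc*y + 4*ba^3*bb^2*bc*y + 3*ba^2*bb^3*bc*y - 6*ba^4*bc^2*y + ba^3*bb*bc^2*y + ba^2*bb^2*bc^2*y + 4*ba*bb^3*bc^2*y - 4*ba^3*bc^3*y - 6*ba^2*bb*bc^3*y - ba*bb^2*bc^3*y - 4*ba*bb*bc^4*y - 2*bb^2*bc^4*y + 4*ba^5*bd*y - 9*ba^4*bb*bd*y - 5*ba^3*bb^2*bd*y + 14*ba^4*bc*bd*y - 3*ba^3*bb*bc*bd*y + 3*ba^2*bb^2*bc*bd*y - 8*ba*bb^3*bc*bd*y + ba^3*bc^2*bd*y + 12*ba^2*bb*bc^2*bd*y + 28*ba*bb^2*bc^2*bd*y + 4*bb^3*bc^2*bd*y - 2*ba^2*bc^3*bd*y - 13*ba*bb*bc^3*bd*y + 10*bb^2*bc^3*bd*y - 8*bb*bc^4*bd*y + ba^3*bb*bd^2*y - 3*ba^2*bb^2*bd^2*y + ba*bb^3*bd^2*y - 2*ba^3*bc*bd^2*y - 30*ba^2*bb*bc*bd^2*y - 6*ba*bb^2*bc*bd^2*y - 11*bb^3*bc*bd^2*y + 13*ba^2*bc^2*bd^2*y + 2*ba*bb*bc^2*bd^2*y + 3*bb^2*bc^2*bd^2*y + 10*ba*bc^3*bd^2*y + 5*bb*bc^3*bd^2*y + 2*ba^3*bd^3*y + 18*ba^2*bb*bd^3*y + ba*bb^2*bd^3*y - 14*ba^2*bc*bd^3*y + 8*ba*bb*bc*bd^3*y + 7*bb^2*bc*bd^3*y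 - 8*ba*bc^2*bd^3*y - 9*bb*bc^2*bd^3*y + 4*bc^3*bd^3*y - 7*ba^2*bd^4*y - 3*ba*bb*bd^4*y + 12*ba*bc*bd^4*y - 3*ba*bd^5*y - bb*bd^5*y + 3*bc*bd^5*y + 3*ba^6 - ba^5*bb - ba^4*bb^2 - ba^3*bb^3 - 8*ba^5*bc + 6*ba^4*bb*bc - 5*ba^3*bb^2*bc + 2*ba^2*bb^3*bc - 8*ba*bb^4*bc - 2*ba^4*bc^2 - 14*ba^3*bb*bc^2 + 14*ba^2*bb^2*bc^2 + 10*ba*bb^3*bc^2 - 8*ba^3*bc^3 - 9*ba^2*bb*bc^3 - 12*ba*bb^2*bc^3 + 7*bb^3*bc^3 - 5*ba^2*bc^4 + 3*ba*bb*bc^4 - 6*bb^2*bc^4 + 2*bb*bc^5 + 7*ba^5*bd + 4*ba^3*bb^2*bd + 2*ba^2*bb^3*bd - 14*ba^3*bb*bc*bd - 15*ba^2*bb^2*bc*bd + ba*bb^3*bc*bd - 8*bb^4*bc*bd + 12*ba^3*bc^2*bd + 6*ba*bb^2*bc^2*bd - 3*bb^3*bc^2*bd - 16*ba^2*bc^3*bd - 6*ba*bb*bc^3*bd + 8*bb^2*bc^3*bd - 12*ba*bc^4*bd - 6*bb*bc^4*bd + 5*ba^4*bd^2 + 7*ba^3*bb*bd^2 + 7*ba^2*bb^2*bd^2 + 3*ba*bb^3*bd^2 + ba^3*bc*bd^2 - 12*ba^2*bb*bc*bd^2 + ba*bb^2*bc*bd^2 + 5*bb^3*bc*bd^2 +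 13*ba^2*bc^2*bd^2 - 5*bb^2*bc^2*bd^2 + 7*bb*bc^3*bd^2 - 5*bc^4*bd^2 - 4*ba^3*bd^3 + 5*ba^2*bb*bd^3 - 5*ba*bb^2*bd^3 - 6*ba^2*bc*bd^3 + 7*ba*bb*bc*bd^3 - 6*bb^2*bc*bd^3 - 16*ba*bc^2*bd^3 + 8*bb*bc^2*bd^3 - bc^3*bd^3 + ba^2*bd^4 + 3*ba*bb*bd^4 - bb^2*bd^4 + ba*bc*bd^4 + 4*bb*bc*bd^4 - 5*bc^2*bd^4 - 4*ba*bd^5 + 2*bc*bd^5 - bd^6 + 3*ba^3*bc*y^2 - ba^2*bb*bc*y^2 + 3*ba*bb*bc^2*y^2 + ba^3*bd*y^2 + 3*ba^2*bc*bd*y^2 + 3*bb*bc^2*bd*y^2 - 3*ba^2*bd^2*y^2 + 7*ba*bb*bd^2*y^2 - 4*bb*bc*bd^2*y^2 + ba*bd^3*y^2 + 7*bb*bd^3*y^2 + 2*ba^4*y - 7*ba^3*bc*y + ba^2*bb*bc*y + 2*ba*bb^2*bc*y + 3*ba^2*bc^2*y - 9*ba*bb*bc^2*y + 5*bb^2*bc^2*y - 2*ba^3*bd*y - 8*ba^2*bb*bd*y + 14*ba*bb^2*bd*y - 2*ba^2*bc*bd*y - 21*ba*bb*bc*bd*y - 8*bb^2*bc*bd*y + 6*ba*bc^2*bd*y - 2*bb*bc^2*bd*y + 2*ba*bb*bd^2*y + 14*bb^2*bd^2*y - 5*ba*bc*bd^2*y - 5*bb*bc*bd^2*y + 3*bc^2*bd^2*y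 - 2*ba*bd^3*y - 3*bc*bd^3*y + 6*bd^4*y - 8*ba^4 - 3*ba^3*bb - 3*ba^2*bb^2 + 7*ba*bb^3 - 18*ba^2*bb*bc - 3*ba*bb^2*bc - 5*bb^3*bc - 7*ba^2*bc^2 - 3*ba*bb*bc^2 - 8*bb^2*bc^2 - 2*bb*bc^3 + 3*ba^3*bd - 10*ba^2*bb*bd + 2*ba*bb^2*bd + 7*bb^3*bd - 2*ba*bb*bc*bd + 4*bb^2*bc*bd - 9*ba*bc^2*bd - 10*bb*bc^2*bd - 3*ba^2*bd^2 - 7*ba*bb*bd^2 - 3*ba*bc*bd^2 - 7*bb*bc*bd^2 - 4*bc^2*bd^2 + 7*bb*bd^3 - 10*bc*bd^3 - bd^4 + ba^2*y^2 + 2*ba*bd*y^2 + bd^2*y^2 + 2*ba^2*y + 4*ba*bd*y + 2*bd^2*y + 2*ba^2 + bb*bc + 3*ba*bd + 2*bd^2 - 1) * (ba*bd - bb*bc - 1)"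
  unfolding relE0_def relE1_def relE2_def relE3_def muE10_def by algebra

lemma certC1:
  fixes y ba bb bc bd :: real
  shows "1 * ((ba+bd)*y*(bb-bc+y*bd) - (ba+bd)^2 - (bb-bc+y*bd)^2 - y + 2) = (y) * relE0 y ba bb bc bd + (0 - 1) * relE1 y ba bb bc bd + (1) * relE2 y ba bb bc bd + (0) * relE3 y ba bb bc bd + (0 - ba*bd*y^2 - ba*bb*y + ba*bc*y - bb*bc*y + ba*bd*y + bb*bd*y - bc*bd*y + ba^2 + bb^2 + bc^2 + bd^2 + y - 2) * (ba*bd - bb*bc - 1)"
  unfolding relE0_def relE1_def relE2_def relE3_def by algebra

definition Dp :: "real \<Rightarrow> real" where "Dp a = a^3*(a-1)*(a^2+a+1)^3"
definition Np :: "real \<Rightarrow> real" where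
  "Np a = a^14 + 3*a^13 + 2*a^12 + a^11 - 2*a^10 - 4*a^9 - a^8 - 4*a^7 - a^6 - 4*a^5 - 2*a^4 + a^3 + 2*a^2 + 3*a + 1"
definition PXf :: "real \<Rightarrow> real \<Rightarrow> real" where "PXf a u = Dp a * u^2 - Np a * u - a * Dp a"

lemma certPX:
  fixes X u a :: real
  shows "32 * a^2 * PXf a u = (256*X^6*a^16 + 32*X^5*u*a^16 - 512*X^5*a^17 - 64*X^4*u*a^17 + 256*X^4*a^18 + 32*X^3*u*a^18 - 64*X^6*a^15 - 32*X^5*u*a^15 - 1040*X^5*a^16 - 64*X^4*u*a^16 + 1248*X^4*a^17 + 96*X^3*u*a^17 - 144*X^3*a^18 - 384*X^6*a^14 - 48*X^5*u*a^14 + 1104*X^5*a^15 + 192*X^4*u*a^15 - 48*X^3*u*a^16 + 592*X^3*a^17 + 32*X^2*u*a^17 - 288*X^2*a^18 - 1184*X^6*a^13 - 112*X^5*u*a^13 + 4120*X^5*a^14 + 448*X^4*u*a^14 - 4464*X^4*a^15 - 432*X^3*u*a^15 + 3000*X^3*a^16 + 96*X^2*u*a^16 - 1280*X^2*a^17 - 256*X^6*u*a^11 - 32*X^5*u^2*a^11 - 896*X^6*a^12 + 520*X^5*u*a^12 + 64*X^4*u^2*a^12 + 7064*X^5*a^13 + 224*X^4*u*a^13 - 32*X^3*u^2*a^13 - 8784*X^4*a^14 - 984*X^3*u*a^14 - 32*X^2*u^2*a^14 + 3192*X^3*a^15 + 80*X^2*u*a^15 - 1440*X^2*a^16 - 32*X*a^17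 - 64*X^6*u*a^10 + 16*X^5*u^2*a^10 + 4784*X^6*a^11 + 2008*X^5*u*a^11 + 96*X^4*u^2*a^11 - 6020*X^5*a^12 - 2752*X^4*u*a^12 - 112*X^3*u^2*a^12 - 1304*X^4*a^13 + 24*X^3*u*a^13 - 32*X^2*u^2*a^13 - 4164*X^3*a^14 - 64*X^2*u*a^14 + 2464*X^2*a^15 - 160*X*a^16 + 160*X^6*u*a^9 + 32*X^5*u^2*a^9 + 1216*X^6*a^10 - 340*X^5*u*a^10 - 96*X^4*u^2*a^10 - 24372*X^5*a^11 - 3168*X^4*u*a^11 - 32*X^3*u^2*a^11 + 30728*X^4*a^12 + 2044*X^3*u*a^12 - 16*X^2*u^2*a^12 - 23684*X^3*a^13 - 904*X^2*u*a^13 - 32*X*u^2*a^13 + 11968*X^2*a^14 + 352*X*u*a^14 - 800*X*a^15 + 608*X^6*u*a^8 + 64*X^5*u^2*a^8 + 10232*X^6*a^9 - 908*X^5*u*a^9 - 272*X^4*u^2*a^9 - 24506*X^5*a^10 + 672*X^4*u*a^10 + 256*X^3*u^2*a^10 + 38084*X^4*a^11 + 1140*X^3*u*a^11 + 64*X^2*u^2*a^11 - 23338*X^3*a^12 - 128*X^2*u*a^12 - 32*X*u^2*a^12 + 14704*X^2*a^13 + 864*X*u*a^13 - 1888*X*a^14 + 128*X^6*u*a^7 - 32*X^5*u^2*a^7 - 30016*X^6*a^8 - 7710*X^5*u*a^8 - 224*X^4*u^2*a^8 + 15334*X^5*a^9 + 10648*X^4*u*a^9 + 704*X^3*u^2*a^9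 + 32*X^2*u^3*a^9 + 8180*X^4*a^10 - 2790*X^3*u*a^10 + 168*X^2*u^2*a^10 + 22366*X^3*a^11 + 2300*X^2*u*a^11 + 16*X*u^2*a^11 - 11872*X^2*a^12 + 448*X*u*a^12 - 448*X*a^13 + 32*u*a^13 - 32*a^14 - 320*X^6*u*a^6 - 64*X^5*u^2*a^6 + 96*X^6*a^7 + 1208*X^5*u*a^7 + 256*X^4*u^2*a^7 + 139111*X^5*a^8 + 18388*X^4*u*a^8 + 592*X^3*u^2*a^8 + 48*X^2*u^3*a^8 - 150898*X^4*a^9 - 16456*X^3*u*a^9 - 376*X^2*u^2*a^9 + 110023*X^3*a^10 + 5232*X^2*u*a^10 + 144*X*u^2*a^10 - 61624*X^2*a^11 - 1760*X*u*a^11 + 6000*X*a^12 + 96*u*a^12 - 128*a^13 - 448*X^6*u*a^5 - 32*X^5*u^2*a^5 - 17520*X^6*a^6 + 512*X^5*u*a^6 + 320*X^4*u^2*a^6 + 67916*X^5*a^7 + 2284*X^4*u*a^7 + 96*X^3*u^2*a^7 + 32*X^2*u^3*a^7 - 241208*X^4*a^8 - 18920*X^3*u*a^8 + 188*X^2*u^2*a^8 + 32*X*u^3*a^8 + 161624*X^3*a^9 + 7708*X^2*u*a^9 - 56*X*u^2*a^9 - 76640*X^2*a^10 - 4864*X*u*a^10 + 14192*X*a^11 + 96*u*a^11 - 352*a^12 - 64*X^6*u*a^4 + 16*X^5*u^2*a^4 + 47216*X^6*a^5 + 9268*X^5*u*a^5 + 96*X^4*u^2*a^5 - 15424*X^5*a^6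 - 12296*X^4*u*a^6 - 144*X^3*u^2*a^6 - 48*X^2*u^3*a^6 - 140942*X^4*a^7 - 17976*X^3*u*a^7 - 436*X^2*u^2*a^7 + 48*X*u^3*a^7 + 72972*X^3*a^8 - 3362*X^2*u*a^8 - 1224*X*u^2*a^8 + 37260*X^2*a^9 - 240*X*u*a^9 - 32*u^2*a^9 + 6824*X*a^10 + 96*u*a^10 - 448*a^11 + 160*X^6*u*a^3 + 32*X^5*u^2*a^3 - 384*X^6*a^4 - 788*X^5*u*a^4 - 160*X^4*u^2*a^4 - 233346*X^5*a^5 - 29408*X^4*u*a^5 - 128*X^3*u^2*a^5 - 96*X^2*u^3*a^5 + 228144*X^4*a^6 + 26106*X^3*u*a^6 + 2938*X^2*u^2*a^6 + 32*X*u^3*a^6 - 79268*X^3*a^7 - 6238*X^2*u*a^7 - 1468*X*u^2*a^7 + 194872*X^2*a^8 + 9664*X*u*a^8 - 64*u^2*a^8 - 27752*X*a^9 - 48*u*a^9 + 512*a^10 + 96*X^6*u*a^2 + 8248*X^6*a^3 - 92*X^5*u*a^3 - 112*X^4*u^2*a^3 - 49434*X^5*a^4 - 2956*X^4*u*a^4 - 96*X^3*u^2*a^4 - 80*X^2*u^3*a^4 + 436144*X^4*a^5 + 52692*X^3*u*a^5 + 4528*X^2*u^2*a^5 - 48*X*u^3*a^5 - 326969*X^3*a^6 - 51553*X^2*u*a^6 - 1700*X*u^2*a^6 + 233374*X^2*a^7 + 22840*X*u*a^7 - 96*u^2*a^7 - 64828*X*a^8 - 208*u*a^8 + 2400*a^9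 - 21600*X^6*a^2 - 3518*X^5*u*a^2 + 32*X^4*u^2*a^2 + 5006*X^5*a^3 + 4048*X^4*u*a^3 - 288*X^3*u^2*a^3 - 32*X^2*u^3*a^3 + 141226*X^4*a^4 + 55818*X^3*u*a^4 + 8390*X^2*u^2*a^4 - 96*X*u^3*a^4 - 292498*X^3*a^5 - 70360*X^2*u*a^5 - 332*X*u^2*a^5 + 73686*X^2*a^6 + 8628*X*u*a^6 - 64*u^2*a^6 - 32980*X*a^7 - 40*u*a^7 + 3648*a^8 + 114999*X^5*a^2 + 13740*X^4*u*a^2 - 224*X^3*u^2*a^2 - 121734*X^4*a^3 + 21300*X^3*u*a^3 + 5688*X^2*u^2*a^3 - 80*X*u^3*a^3 - 52893*X^3*a^4 - 86227*X^2*u*a^4 - 1020*X*u^2*a^4 - 91506*X^2*a^5 - 10868*X*u*a^5 - 16*u^2*a^5 + 93002*X*a^6 + 808*u*a^6 - 1056*a^7 - 226284*X^4*a^2 - 132*X^3*u*a^2 + 3326*X^2*u^2*a^2 - 32*X*u^3*a^2 + 222526*X^3*a^3 - 36744*X^2*u*a^3 - 684*X*u^2*a^3 - 114508*X^2*a^4 - 40274*X*u*a^4 + 128*u^2*a^4 + 149942*X*a^5 + 892*u*a^5 - 10240*a^6 + 187114*X^3*a^2 - 12071*X^2*u*a^2 - 756*X*u^2*a^2 - 110922*X^2*a^3 - 36496*X*u*a^3 + 144*u^2*a^3 + 72201*X*a^4 - 92*u*a^4 - 15952*a^5 - 29628*X^2*a^2 - 23550*X*u*a^2 + 64*u^2*a^2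 - 33316*X*a^3 + 684*u*a^3 + 3792*a^4 - 42345*X*a^2 + 788*u*a^2 + 30192*a^3 + 17744*a^2) * ((a^2+a+1)^2*(a-1)^2*X^2 - a^3 - (a^2+a+1)*(a-1)^2*(a+1)^2*X) + (256*X^4*a^14 + 32*X^3*u*a^14 - 64*X^4*a^13 - 32*X^3*u*a^13 - 400*X^3*a^14 - 32*X^2*u*a^14 - 384*X^4*a^12 - 48*X^3*u*a^12 + 400*X^3*a^13 + 32*X^2*u*a^13 - 144*X^2*a^14 - 1184*X^4*a^11 - 112*X^3*u*a^11 + 792*X^3*a^12 + 80*X^2*u*a^12 - 576*X^2*a^13 - 32*X*u*a^13 + 288*X*a^14 - 256*X^4*u*a^9 - 32*X^3*u^2*a^9 - 896*X^4*a^10 + 8*X^3*u*a^10 + 1272*X^3*a^11 + 80*X^2*u*a^11 - 88*X^2*a^12 + 384*X*a^13 - 64*X^4*u*a^8 + 16*X^3*u^2*a^8 + 4784*X^4*a^9 + 1112*X^3*u*a^9 + 32*X^2*u^2*a^9 - 452*X^3*a^10 - 56*X^2*u*a^10 + 2016*X^2*a^11 + 80*X*u*a^11 - 928*X*a^12 + 32*a^13 + 160*X^4*u*a^7 + 32*X^3*u^2*a^7 + 1216*X^4*a^8 - 468*X^3*u*a^8 - 16*X^2*u^2*a^8 - 9476*X^3*a^9 - 648*X^2*u*a^9 + 3732*X^2*a^10 + 128*X*u*a^10 - 2160*X*a^11 + 64*a^12 + 608*X^4*u*a^6 + 64*X^3*u^2*a^6 + 10232*X^4*a^7 + 468*X^3*u*a^7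 - 64*X^2*u^2*a^7 + 3046*X^3*a^8 + 892*X^2*u*a^8 + 32*X*u^2*a^8 + 720*X^2*a^9 - 184*X*u*a^9 - 2384*X*a^10 - 32*u*a^10 + 192*a^11 + 128*X^4*u*a^5 - 32*X^3*u^2*a^5 - 30016*X^4*a^6 - 5534*X^3*u*a^6 - 48*X^2*u^2*a^6 - 9314*X^3*a^7 + 124*X^2*u*a^7 + 16*X*u^2*a^7 - 11310*X^2*a^8 - 1168*X*u*a^8 + 5320*X*a^9 - 320*X^4*u*a^4 - 64*X^3*u^2*a^4 + 96*X^4*a^5 + 1464*X^3*u*a^5 + 96*X^2*u^2*a^5 + 58815*X^3*a^6 + 3490*X^2*u*a^6 - 48*X*u^2*a^6 - 17072*X^2*a^7 + 132*X*u*a^7 + 11944*X*a^8 + 16*u*a^8 - 672*a^9 - 448*X^4*u*a^3 - 32*X^3*u^2*a^3 - 17520*X^4*a^4 - 928*X^3*u*a^4 + 80*X^2*u^2*a^4 + 16820*X^3*a^5 + 1242*X^2*u*a^5 - 96*X*u^2*a^5 - 1963*X^2*a^6 + 616*X*u*a^6 + 7828*X*a^7 + 48*u*a^7 - 992*a^8 - 64*X^4*u*a^2 + 16*X^3*u^2*a^2 + 47216*X^4*a^3 + 7700*X^3*u*a^3 - 16*X^2*u^2*a^3 + 1216*X^3*a^4 - 1858*X^2*u*a^4 - 11381*X^2*a^5 + 1436*X*u*a^5 + 32*u^2*a^5 - 19676*X*a^6 - 104*u*a^6 - 896*a^7 + 160*X^4*u*a + 32*X^3*u^2*a - 384*X^4*a^2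 - 916*X^3*u*a^2 - 80*X^2*u^2*a^2 - 100330*X^3*a^3 - 6524*X^2*u*a^3 + 112*X*u^2*a^3 + 35385*X^2*a^4 - 1048*X*u*a^4 - 16*u^2*a^4 - 44470*X*a^5 - 776*u*a^5 + 3872*a^6 + 96*X^4*u + 8248*X^4*a + 484*X^3*u*a - 16*X^2*u^2*a - 20738*X^3*a^2 - 2118*X^2*u*a^2 + 48*X*u^2*a^2 + 30186*X^2*a^3 + 2650*X*u*a^3 - 32*u^2*a^3 + 11906*X*a^4 + 732*u*a^4 + 3360*a^5 - 21600*X^4 - 3230*X^3*u + 32*X^2*u^2 + 8150*X^3*a + 1598*X^2*u*a - 48*X*u^2*a + 21619*X^2*a^2 + 584*X*u*a^2 + 8857*X*a^3 - 724*u*a^3 + 5264*a^4 + 50199*X^3 + 3762*X^2*u - 32*X*u^2 - 28629*X^2*a + 168*X*u*a + 26400*X*a^2 - 32*u*a^2 - 17744*a^3 - 10887*X^2 - 660*X*u - 12448*X*a + 32*u*a - 17744*X + 32*u) * (a^2*(a^2+a+1)^2*X*u - (a*(a^2+a+1)*(X^2 - 3*X + 1) - a*(a*(a^2+a+1)*X^2 - ((a^2+a+1)^2 + a^2)*X + a^2))^2)"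
  unfolding PXf_def Dp_def Np_def by algebra


lemma hyp_alg:
  fixes x y a M :: real
  assumes Q: "(y-2)*(y+1)*((y+1)*x^4 - (y+2)*x^2) = 1"
    and ya: "a*y = a^2+1"
    and hM: "x*(y+1)*M = (y+1)*(x^4-3*x^2+1) - a*((y+1)*x^4 - (y^2+2*y+2)*x^2 + 1)"
    and a0: "a \<noteq> 0"
  shows "PXf a (M^2) = 0"
proof -
  define X u where "X = x^2" "u = M^2"
  have Qp: "(a^2+a+1)^2*(a-1)^2*X^2 - a^3 - (a^2+a+1)*(a-1)^2*(a+1)^2*X = 0"
  proof -
    have "(a^2+a+1)^2*(a-1)^2*X^2 - a^3 - (a^2+a+1)*(a-1)^2*(a+1)^2*X
        = a^3 * ((y-2)*(y+1)*((y+1)*x^4 - (y+2)*x^2) - 1)"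
      using ya unfolding X_u_def by algebra
    then show ?thesis using Q by simp
  qed
  have hM': "a*x*(a^2+a+1)*M = (a*(a^2+a+1)*(X^2 - 3*X + 1) - a*(a*(a^2+a+1)*X^2 - ((a^2+a+1)^2 + a^2)*X + a^2))"
  proof -
    have "a*x*(a^2+a+1)*M = a^2 * (x*(y+1)*M)" using ya by algebra
    also have "\<dots> = (a*(a^2+a+1)*(X^2 - 3*X + 1) - a*(a*(a^2+a+1)*X^2 - ((a^2+a+1)^2 + a^2)*X + a^2))"
      unfolding hM using ya unfolding X_u_def by algebra
    finally show ?thesis .
  qed
  have Sp: "a^2*(a^2+a+1)^2*X*u - (a*(a^2+a+1)*(X^2 - 3*X + 1) - a*(a*(a^2+a+1)*X^2 - ((a^2+a+1)^2 + a^2)*X + a^2))^2 = 0"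
    using hM' unfolding X_u_def by algebra
  have "32 * a^2 * PXf a u = 0" by (subst certPX[where X=X and u=u and a=a]) (simp only: Qp Sp mult_zero_right add_0_right)
  then show ?thesis using a0 unfolding X_u_def by simp
qed

fun hp :: "real list \<Rightarrow> real \<Rightarrow> real" where
  "hp [] t = 0"
| "hp (c # cs) t = c + t * hp cs t"

fun bp :: "real list \<Rightarrow> real \<Rightarrow> real \<Rightarrow> real" where
  "bp [] t w = 0"
| "bp (c # cs) t w = c * w ^ length cs + t * bp cs t w"

lemma hp_nonneg: "list_all (\<lambda>c. 0 \<le> c) cs \<Longrightarrow> 0 \<le> t \<Longrightarrow> 0 \<le> hp cs t"
  by (induction cs) auto

lemma hp_pos: "0 < c \<Longrightarrow> list_all (\<lambda>c. 0 \<le> c) cs \<Longrightarrow> 0 \<le> t \<Longrightarrow> 0 < hp (c # cs) t"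
  using hp_nonneg[of cs t] by (simp add: add_pos_nonneg)

lemma bp_nonneg: "list_all (\<lambda>c. 0 \<le> c) cs \<Longrightarrow> 0 \<le> t \<Longrightarrow> 0 \<le> w \<Longrightarrow> 0 \<le> bp cs t w"
  by (induction cs) auto

lemma bp_pos: "0 < c \<Longrightarrow> list_all (\<lambda>c. 0 \<le> c) cs \<Longrightarrow> 0 \<le> t \<Longrightarrow> 0 < w \<Longrightarrow> 0 < bp (c # cs) t w"
  using bp_nonneg[of cs t w] by (simp add: add_pos_nonneg)

lemma idA: "Dp (1+t) * (1+t)^10 - Np (1+t) = hp [4, 55, 328, 2279, 12230, 45233, 120699, 243793, 385358, 487094, 498929, 417080, 285114, 158947, 71708, 25821, 7258, 1537, 231, 22, 1] t"
  unfolding Dp_def Np_def hp.simps by algebra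

lemma idH: "(1+t)^10 * (Dp (1+t) * (1+t)^10 - Np (1+t)) - (1+t) * Dp (1+t) = hp [4, 68, 869, 7920, 56113, 320647, 1479287, 5526459, 16900688, 42896516, 91568726, 166253657, 259068233, 348890597, 408140041, 416181712, 370670177, 288543503, 196185698, 116272817, 59858307, 26628711, 10162663, 3294654, 895232, 200158, 35873, 4957, 496, 32, 1] t"
  unfolding Dp_def Np_def hp.simps by algebra

lemma idDm: "Dp (-(1+t)) = hp [2, 13, 42, 88, 131, 144, 118, 71, 30, 8, 1] t"
  unfolding Dp_def hp.simps by algebra

lemma idG2: "Dp (-(3/2+t)) * (3/2+t)^10 - Np (-(3/2+t)) = hp [2767075529/1048576, 1085125305/32768, 25902046331/131072, 12298108939/16384, 133727245805/65536, 4323162473/1024, 14120938757/2048, 1164235651/128, 20144866289/2048, 281650567/32, 1676548649/256, 129842555/32, 267373097/128, 3553207/4, 2470989/8, 86424, 303893/16, 3158, 747/2, 28, 1] t"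
  unfolding Dp_def Np_def hp.simps by algebra

lemma idDisc: "4*(1+t)*(Dp (-(1+t)))^2 - (Np (-(1+t)))^2 = t^2 * (21743271936 * (1/2 - t)^26 + 706656337920 * t^1 * (1/2 - t)^25 + 11021422952448 * t^2 * (1/2 - t)^24 + 109812582973440 * t^3 * (1/2 - t)^23 + 784946075533312 * t^4 * (1/2 - t)^22 + 4285412755374080 * t^5 * (1/2 - t)^21 + 18574634885578752 * t^6 * (1/2 - t)^20 + 65591018179788800 * t^7 * (1/2 - t)^19 + 192131883338563584 * t^8 * (1/2 - t)^18 + 472911895084400640 * t^9 * (1/2 - t)^17 + 987170386027216896 * t^10 * (1/2 - t)^16 + 1758893592082513920 * t^11 * (1/2 - t)^15 + 2686355803100545024 * t^12 * (1/2 - t)^14 + 3525197119696977920 * t^13 * (1/2 - t)^13 + 3977155038601601024 * t^14 * (1/2 - t)^12 + 3853729331030159360 * t^15 * (1/2 - t)^11 + 3198243702394490880 * t^16 * (1/2 - t)^10 + 2262766029417856000 * t^17 * (1/2 - t)^9 + 1355412014374362112 * t^18 * (1/2 - t)^8 + 680773168135621120 * t^19 * (1/2 - t)^7 + 282896600838633664 * t^20 * (1/2 - t)^6 + 95474618667540480 * t^21 * (1/2 - t)^5 + 25487048242053472 * t^22 * (1/2 - t)^4 + 5174295291537360 * t^23 * (1/2 - t)^3 + 749906178476636 * t^24 * (1/2 - t)^2 + 69038219437340 * t^25 * (1/2 - t)^1 + 3030577238639 * t^26 * (1/2 - t)^0)"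
  unfolding Dp_def Np_def by algebra

lemma discpos: "0 \<le> (t::real) \<Longrightarrow> t < 1/2 \<Longrightarrow> 0 < (21743271936 * (1/2 - t)^26 + 706656337920 * t^1 * (1/2 - t)^25 + 11021422952448 * t^2 * (1/2 - t)^24 + 109812582973440 * t^3 * (1/2 - t)^23 + 784946075533312 * t^4 * (1/2 - t)^22 + 4285412755374080 * t^5 * (1/2 - t)^21 + 18574634885578752 * t^6 * (1/2 - t)^20 + 65591018179788800 * t^7 * (1/2 - t)^19 + 192131883338563584 * t^8 * (1/2 - t)^18 + 472911895084400640 * t^9 * (1/2 - t)^17 + 987170386027216896 * t^10 * (1/2 - t)^16 + 1758893592082513920 * t^11 * (1/2 - t)^15 + 2686355803100545024 * t^12 * (1/2 - t)^14 + 3525197119696977920 * t^13 * (1/2 - t)^13 + 3977155038601601024 * t^14 * (1/2 - t)^12 + 3853729331030159360 * t^15 * (1/2 - t)^11 + 3198243702394490880 * t^16 * (1/2 - t)^10 + 2262766029417856000 * t^17 * (1/2 - t)^9 + 1355412014374362112 * t^18 * (1/2 - t)^8 + 680773168135621120 * t^19 * (1/2 - t)^7 + 282896600838633664 * t^20 * (1/2 - t)^6 + 95474618667540480 * t^21 * (1/2 - t)^5 + 25487048242053472 * t^22 * (1/2 - t)^4 + 5174295291537360 * t^23 * (1/2 - t)^3 + 749906178476636 * t^24 * (1/2 - t)^2 + 69038219437340 * t^25 * (1/2 - t)^1 + 3030577238639 * t^26 * (1/2 - t)^0)"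
  by (intro add_pos_nonneg mult_pos_pos mult_nonneg_nonneg zero_less_power zero_le_power; simp)

lemma px_pos:
  fixes a Y :: real
  assumes a: "1 < \<bar>a\<bar>" and Y: "a^10 \<le> Y"
  shows "0 < PXf a Y"
proof -
  have PXe: "PXf a Y = Y*(Dp a*Y - Np a) - a*Dp a"
    by (simp add: PXf_def algebra_simps power2_eq_square)
  have a10: "0 \<le> a^10" by (simp add: zero_le_even_power)
  show ?thesis
  proof (cases "a > 1")
    case True
    define t where "t = a - 1"
    have t0: "0 \<le> t" and at: "a = 1 + t" using True by (auto simp: t_def)
    have G: "0 < Dp a * a^10 - Np a" unfolding at idA by (rule hp_pos) (simp_all add: t0)
    have H: "0 < a^10 * (Dp a * a^10 - Np a) - a * Dp a" unfolding at idH by (rule hp_pos) (simp_all add: t0)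
    have D0: "0 \<le> Dp a" unfolding Dp_def using True by (intro mult_nonneg_nonneg) auto
    have 1: "Dp a * a^10 \<le> Dp a * Y" by (rule mult_left_mono[OF Y D0])
    have 2: "a^10 * (Dp a * Y - Np a) \<le> Y * (Dp a * Y - Np a)"
      by (rule mult_right_mono[OF Y]) (use G 1 in linarith)
    have 3: "a^10 * (Dp a * a^10 - Np a) \<le> a^10 * (Dp a * Y - Np a)"
      by (rule mult_left_mono) (use 1 a10 in linarith)+
    show ?thesis unfolding PXe using H 2 3 by linarith
  next
    case False
    then have an: "a < -1" using a by linarith
    define t where "t = -a - 1"
    have t0: "0 < t" and at: "a = -(1 + t)" using an by (auto simp: t_def)
    have D0: "0 < Dp a" unfolding at idDm by (rule hp_pos) (simp_all add: less_imp_le[OF t0])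
    show ?thesis
    proof (cases "a \<le> -3/2")
      case True
      define s where "s = -a - 3/2"
      have s0: "0 \<le> s" and as: "a = -(3/2 + s)" using True by (auto simp: s_def)
      have p: "a^10 = (3/2+s)^10" unfolding as by algebra
      have e: "Dp a * a^10 - Np a = Dp (-(3/2+s)) * (3/2+s)^10 - Np (-(3/2+s))"
        unfolding p by (simp add: as)
      have G: "0 < Dp a * a^10 - Np a" unfolding e idG2 by (rule hp_pos) (simp_all add: s0)
      have 1: "Dp a * a^10 \<le> Dp a * Y" by (rule mult_left_mono[OF Y]) (use D0 in simp)
      have 2: "0 \<le> Y * (Dp a * Y - Np a)"
        by (rule mult_nonneg_nonneg) (use Y a10 G 1 in linarith)+
      have 3: "0 < - a * Dp a" using D0 an by (intro mult_pos_pos) auto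
      show ?thesis unfolding PXe using 2 3 by linarith
    next
      case False
      then have t2: "t < 1/2" using t_def by simp
      have disc: "0 < 4*(1+t)*(Dp a)^2 - (Np a)^2"
        unfolding at idDisc
        by (rule mult_pos_pos) (use t0 discpos[OF less_imp_le[OF t0] t2] in simp_all)
      have "4 * Dp a * PXf a Y = (2*Dp a*Y - Np a)^2 + (4*(1+t)*(Dp a)^2 - (Np a)^2)"
        unfolding PXf_def at by (simp add: algebra_simps power2_eq_square)
      then have "0 < 4 * Dp a * PXf a Y" using disc by (smt (verit) zero_le_power2)
      then show ?thesis using D0 by (simp add: zero_less_mult_iff)
    qed
  qed
qed

lemma comp_inv: "matrix_inv (mk 0 (-1) 1 y) = mk y 1 (-1) 0"
  using inv_mk[of 0 y "-1" 1] by simp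

lemma rel_E:
  assumes d: "b1*b4 - b2*b3 = 1"
    and r: "rel_lhs (mk 0 (-1) 1 y) (mk b1 b2 b3 b4) = rel_rhs (mk 0 (-1) 1 y) (mk b1 b2 b3 b4)"
  shows "relE0 y b1 b2 b3 b4 = 0" "relE1 y b1 b2 b3 b4 = 0" "relE2 y b1 b2 b3 b4 = 0" "relE3 y b1 b2 b3 b4 = 0"
proof -
  have h: "(rel_lhs (mk 0 (-1) 1 y) (mk b1 b2 b3 b4))$1$1 = (rel_rhs (mk 0 (-1) 1 y) (mk b1 b2 b3 b4))$1$1"
    "(rel_lhs (mk 0 (-1) 1 y) (mk b1 b2 b3 b4))$1$2 = (rel_rhs (mk 0 (-1) 1 y) (mk b1 b2 b3 b4))$1$2"
    "(rel_lhs (mk 0 (-1) 1 y) (mk b1 b2 b3 b4))$2$1 = (rel_rhs (mk 0 (-1) 1 y) (mk b1 b2 b3 b4))$2$1"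
    "(rel_lhs (mk 0 (-1) 1 y) (mk b1 b2 b3 b4))$2$2 = (rel_rhs (mk 0 (-1) 1 y) (mk b1 b2 b3 b4))$2$2"
    using r by simp_all
  note h' = h[unfolded rel_lhs_def rel_rhs_def comp_inv inv_mk[OF d] mk_mult mk_nth]
  show "relE0 y b1 b2 b3 b4 = 0" using h'(1) unfolding relE0_def by algebra
  show "relE1 y b1 b2 b3 b4 = 0" using h'(2) unfolding relE1_def by algebra
  show "relE2 y b1 b2 b3 b4 = 0" using h'(3) unfolding relE2_def by algebra
  show "relE3 y b1 b2 b3 b4 = 0" using h'(4) unfolding relE3_def by algebra
qed

lemma mu_E:
  assumes d: "b1*b4 - b2*b3 = 1"
  shows "(mu_img (mk 0 (-1) 1 y) (mk b1 b2 b3 b4))$1$1 = muE00 y b1 b2 b3 b4"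
    "(mu_img (mk 0 (-1) 1 y) (mk b1 b2 b3 b4))$2$1 = muE10 y b1 b2 b3 b4"
  unfolding mu_img_def comp_inv inv_mk[OF d] mk_mult mk_nth muE00_def muE10_def by algebra+

lemma mpow_inv_cancel: "X ** Y = mat 1 \<Longrightarrow> mpow X k ** mpow Y k = mat 1"
proof (induction k)
  case 0 then show ?case by simp
next
  case (Suc k)
  have e1: "mpow Y (Suc k) = mpow Y k ** Y" by (rule mpow_Suc_right)
  have e2: "mpow X (Suc k) = X ** mpow X k" by simp
  have "mpow X (Suc k) ** mpow Y (Suc k) = X ** (mpow X k ** mpow Y k) ** Y"
    unfolding e1 e2 by (simp only: matrix_mul_assoc)
  also have "\<dots> = mat 1" using Suc by simp
  finally show ?case .
qed

lemma comp_eig: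
  assumes ya: "a*y = a^2+1"
  shows "(mpow (mk 0 (-1) 1 y) k)$1$1 + a*(mpow (mk 0 (-1) 1 y) k)$2$1 = a^k
       \<and> (mpow (mk 0 (-1) 1 y) k)$1$2 + a*(mpow (mk 0 (-1) 1 y) k)$2$2 = a^k * a"
proof (induction k)
  case 0 then show ?case by (simp add: mat1_mk)
next
  case (Suc k)
  define X where "X = mpow (mk 0 (-1) 1 y) k"
  obtain x11 x12 x21 x22 where XX: "X = mk x11 x12 x21 x22" using m2_mk by blast
  have e: "mpow (mk 0 (-1) 1 y) (Suc k) = mk 0 (-1) 1 y ** mk x11 x12 x21 x22" by (simp add: X_def XX[symmetric])
  have IH: "x11 + a*x21 = a^k" "x12 + a*x22 = a^k * a" using Suc unfolding X_def[symmetric] XX by auto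
  have 1: "0 * x11 + - 1 * x21 + a * (1 * x11 + y * x21) = a * (x11 + a*x21)" using ya by algebra
  have 2: "0 * x12 + - 1 * x22 + a * (1 * x12 + y * x22) = a * (x12 + a*x22)" using ya by algebra
  show ?case unfolding e mk_mult mk_nth 1 2 IH by simp
qed

lemma exists_a:
  fixes y :: real
  assumes "4 < y^2"
  shows "\<exists>a. a*y = a^2+1 \<and> 1 < \<bar>a\<bar>"
proof -
  define s where "s = sqrt (y^2 - 4)"
  have s0: "0 \<le> s" unfolding s_def using less_imp_le[OF assms] by simp
  have ss: "s^2 = y^2 - 4" unfolding s_def using less_imp_le[OF assms] by simp
  show ?thesis
  proof (cases "y > 0")
    case True
    have y2: "y > 2"
    proof (rule ccontr)
      assume "\<not> y > 2"
      then have "y^2 \<le> 2^2" using True by (intro power_mono) auto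
      then show False using assms by simp
    qed
    have h: "(y + s)*y*2 = (y+s)^2 + 4" using ss by algebra
    have eq: "((y+s)/2)*y = ((y+s)/2)^2 + 1" using h by (simp add: power_divide field_simps)
    show ?thesis
      by (rule exI[of _ "(y + s)/2"]) (use eq s0 y2 in auto)
  next
    case False
    have y2: "y < -2"
    proof (rule ccontr)
      assume "\<not> y < -2"
      then have "(-y)^2 \<le> 2^2" using False by (intro power_mono) auto
      then show False using assms by simp
    qed
    have h: "(y - s)*y*2 = (y-s)^2 + 4" using ss by algebra
    have eq: "((y-s)/2)*y = ((y-s)/2)^2 + 1" using h by (simp add: power_divide field_simps)
    show ?thesis
      by (rule exI[of _ "(y - s)/2"]) (use eq s0 y2 in auto)
  qed
qed

lemma core_false:
  fixes y b1 b2 b3 b4 :: real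
  assumes d: "b1*b4 - b2*b3 = 1"
    and rep: "SL2_rep n (mk 0 (-1) 1 y) (mk b1 b2 b3 b4)"
    and n: "n \<le> -5"
  shows False
proof -
  let ?C = "mk 0 (-1) 1 y" and ?B = "mk b1 b2 b3 b4"
  have r: "rel_lhs ?C ?B = rel_rhs ?C ?B" and f: "fill_img ?C ?B n = mat 1"
    using rep by (auto simp: SL2_rep_def)
  note e = rel_E[OF d r]
  have d': "b1*b4 - b2*b3 - 1 = 0" using d by simp
  define x where "x = b1 + b4"
  have Qf: "(y-2)*(y+1)*((y+1)*x^4 - (y+2)*x^2) = 1"
  proof -
    have "1 * ((y-2)*(y+1)*((y+1)*(b1+b4)^4 - (y+2)*(b1+b4)^2) - 1) = 0"
      by (subst certQ[where y=y and ba=b1 and bb=b2 and bc=b3 and bd=b4]) (simp only: e d' mult_zero_right add_0_right add_0_left)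
    then show ?thesis unfolding x_def by simp
  qed
  have C1f: "x*y*(b2-b3+y*b4) - x^2 - (b2-b3+y*b4)^2 - y + 2 = 0"
  proof -
    have "1 * ((b1+b4)*y*(b2-b3+y*b4) - (b1+b4)^2 - (b2-b3+y*b4)^2 - y + 2) = 0"
      by (subst certC1[where y=y and ba=b1 and bb=b2 and bc=b3 and bd=b4]) (simp only: e d' mult_zero_right add_0_right add_0_left)
    then show ?thesis unfolding x_def by simp
  qed
  have I2f: "x^4 - 3*x^2 - x*muE00 y b1 b2 b3 b4 + 1 = 0"
  proof -
    have "1 * ((b1+b4)^4 - 3*(b1+b4)^2 - (b1+b4)*muE00 y b1 b2 b3 b4 + 1) = 0"
      by (subst certI2[where y=y and ba=b1 and bb=b2 and bc=b3 and bd=b4]) (simp only: e d' mult_zero_right add_0_right add_0_left)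
    then show ?thesis unfolding x_def by simp
  qed
  have I3f: "(y+1)*x^4 - y^2*x^2 - 2*(y+1)*x^2 + (y+1)*x*muE10 y b1 b2 b3 b4 + 1 = 0"
  proof -
    have "1 * ((y+1)*(b1+b4)^4 - y^2*(b1+b4)^2 - 2*(y+1)*(b1+b4)^2 + (y+1)*(b1+b4)*muE10 y b1 b2 b3 b4 + 1) = 0"
      by (subst certI3[where y=y and ba=b1 and bb=b2 and bc=b3 and bd=b4]) (simp only: e d' mult_zero_right add_0_right add_0_left)
    then show ?thesis unfolding x_def by simp
  qed
  consider "y^2 < 4" | "y^2 = 4" | "4 < y^2" by linarith
  then show False
  proof cases
    case 1
    define z where "z = b2 - b3 + y*b4"
    have kap: "4*(x^2 + y^2 + z^2 - x*y*z - 4) = (2*(b1 - b4 + y*b3) - y*(b2+b3))^2 + (4 - y^2)*(b2+b3)^2"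
      using d unfolding x_def z_def by algebra
    have "0 \<le> (4 - y^2)*(b2+b3)^2" using 1 by simp
    then have "0 \<le> x^2 + y^2 + z^2 - x*y*z - 4" using kap by (smt (verit) zero_le_power2)
    moreover have "x^2 + z^2 - x*y*z = 2 - y" using C1f unfolding z_def by (simp add: algebra_simps)
    ultimately have k: "0 \<le> (y-2)*(y+1)" by (simp add: algebra_simps power2_eq_square)
    have y2: "y < 2"
    proof (rule ccontr)
      assume "\<not> y < 2"
      then have "2^2 \<le> y^2" by (intro power_mono) auto
      then show False using 1 by simp
    qed
    have y2': "-2 < y"
    proof (rule ccontr)
      assume "\<not> -2 < y"
      then have "2^2 \<le> (-y)^2" by (intro power_mono) auto
      then show False using 1 by simp
    qed
    have yp: "y + 1 \<le> 0"
    proof (rule ccontr)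
      assume "\<not> y + 1 \<le> 0"
      then have "(y-2)*(y+1) < 0" using y2 by (intro mult_neg_pos) auto
      then show False using k by simp
    qed
    have "(y+1)*x^4 \<le> 0" using yp by (simp add: mult_nonpos_nonneg zero_le_even_power)
    moreover have "0 \<le> (y+2)*x^2" using y2' by simp
    ultimately have "(y+1)*x^4 - (y+2)*x^2 \<le> 0" by linarith
    then have "(y-2)*(y+1)*((y+1)*x^4 - (y+2)*x^2) \<le> 0" by (rule mult_nonneg_nonpos[OF k])
    then show False using Qf by simp
  next
    case 2
    have yy: "(y-2)*(y+2) = y^2 - 4" by (simp add: algebra_simps power2_eq_square)
    then have "(y-2)*(y+2) = 0" using 2 by simp
    then have "y - 2 = 0 \<or> y + 2 = 0" by simp
    then have "y = 2 \<or> y = -2" by auto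
    then show False
    proof
      assume "y = 2" then show False using Qf by simp
    next
      assume "y = -2"
      then have "-4 * x^4 = 1" using Qf by simp
      moreover have "0 \<le> x^4" by (simp add: zero_le_even_power)
      ultimately show False by simp
    qed
  next
    case 3
    obtain a where ya: "a*y = a^2+1" and a1: "1 < \<bar>a\<bar>" using exists_a[OF 3] by blast
    have a0: "a \<noteq> 0" using a1 by auto
    define k where "k = nat (-n)"
    have k5: "5 \<le> k" using n unfolding k_def by simp
    have dC: "0 * y - (-1) * 1 = (1::real)" by simp
    have Ci: "matrix_inv ?C ** ?C = mat 1" by (simp add: comp_inv mk_mult mat1_mk)
    have z: "zpow ?C n = mpow (matrix_inv ?C) k" using n unfolding zpow_def k_def by simp
    have mu: "mu_img ?C ?B = mpow ?C k"
    proof -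
      have "mu_img ?C ?B = mu_img ?C ?B ** (mpow (matrix_inv ?C) k ** mpow ?C k)"
        using mpow_inv_cancel[OF Ci, of k] by simp
      also have "\<dots> = fill_img ?C ?B n ** mpow ?C k"
        unfolding fill_img_def z by (simp add: matrix_mul_assoc)
      also have "\<dots> = mpow ?C k" using f by simp
      finally show ?thesis .
    qed
    define M where "M = muE00 y b1 b2 b3 b4 + a * muE10 y b1 b2 b3 b4"
    have Mk: "M = a^k"
      using comp_eig[OF ya, of k] unfolding M_def mu_E(1,2)[OF d, symmetric] mu by simp
    have hM: "x*(y+1)*M = (y+1)*(x^4-3*x^2+1) - a*((y+1)*x^4 - (y^2+2*y+2)*x^2 + 1)"
      using I2f I3f unfolding M_def by algebra
    have px: "PXf a (M^2) = 0" by (rule hyp_alg[OF Qf ya hM a0])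
    have "a^10 \<le> M^2"
    proof -
      have "M^2 = (a^2)^k" unfolding Mk by (simp add: power_mult[symmetric] mult.commute)
      moreover have "(a^2)^5 \<le> (a^2)^k"
        by (rule power_increasing[OF k5]) (use one_le_power[of "\<bar>a\<bar>" 2] a1 in simp)
      ultimately show ?thesis by (simp add: power_mult[symmetric])
    qed
    then have "0 < PXf a (M^2)" by (rule px_pos[OF a1])
    then show False using px by simp
  qed
qed

lemma inv_one: "matrix_inv (mat 1 :: m2) = mat 1"
  by (rule matrix_inv_eq) simp_all

lemma mpow_one: "mpow (mat 1) k = mat 1"
  by (induction k) simp_all

lemma zpow_one: "zpow (mat 1) n = mat 1"
  by (simp add: zpow_def inv_one mpow_one)

lemma sl2_triv:
  assumes rep: "SL2_rep n L B" and n: "n \<le> -5"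
  shows "L = mat 1 \<and> B = mat 1"
proof -
  have dL: "det L = 1" and dB: "det B = 1" using rep by (auto simp: SL2_rep_def SL2_def)
  obtain b1 b2 b3 b4 where Bm: "B = mk b1 b2 b3 b4" using m2_mk by blast
  have d: "b1*b4 - b2*b3 = 1" using dB unfolding Bm det_mk .
  show ?thesis
  proof (cases "L = mat 1")
    case True
    have "mu_img (mat 1) (mk b1 b2 b3 b4) = mk b1 b2 b3 b4"
      unfolding mu_img_def inv_one inv_mk[OF d] by (simp add: mk_mult mk_eq) (use d in algebra)
    then have "B = mat 1" using rep True unfolding SL2_rep_def fill_img_def Bm by (simp add: zpow_one)
    then show ?thesis using True by simp
  next
    case L1: False
    show ?thesis
    proof (cases "L = - mat 1")
      case True
      have Lm: "L = mk (-1) 0 0 (-1)" unfolding True mat1_mk neg_mk by simp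
      have iL: "matrix_inv (mk (-1) 0 0 (-1)) = mk (-1) 0 0 (-1)" using inv_mk[of "-1" "-1" 0 0] by simp
      have r: "rel_lhs L B = rel_rhs L B" using rep by (simp add: SL2_rep_def)
      have h: "(rel_lhs (mk (-1) 0 0 (-1)) (mk b1 b2 b3 b4))$1$1 = (rel_rhs (mk (-1) 0 0 (-1)) (mk b1 b2 b3 b4))$1$1"
        using r unfolding Lm Bm by simp
      note h' = h[unfolded rel_lhs_def rel_rhs_def iL inv_mk[OF d] mk_mult mk_nth]
      have "(1::real) = 0" using h' d by algebra
      then show ?thesis by simp
    next
      case L2: False
      obtain P Q where PQ: "P ** Q = mat 1" and QP: "Q ** P = mat 1"
        and QLP: "Q ** L ** P = mk 0 (-1) 1 (L$1$1 + L$2$2)"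
        using companion_conj[OF dL L1 L2] by blast
      interpret cj P Q by (rule cj.intro[OF PQ QP])
      have rep': "SL2_rep n (cf L) (cf B)" by (rule cf_rep[OF rep])
      obtain c1 c2 c3 c4 where Bm': "cf B = mk c1 c2 c3 c4" using m2_mk by blast
      have d': "c1*c4 - c2*c3 = 1" using cf_det[of B] dB unfolding Bm' det_mk by simp
      have "SL2_rep n (mk 0 (-1) 1 (L$1$1 + L$2$2)) (mk c1 c2 c3 c4)"
        using rep' unfolding Bm'[symmetric] cf_def QLP[symmetric] .
      then have False by (rule core_false[OF d' _ n])
      then show ?thesis ..
    qed
  qed
qed

lemma neg_mult_left: "(- A) ** (B::m2) = - (A ** B)"
  by (simp add: vec_eq_iff matrix_matrix_mult_def sum_2)

lemma neg_mult_right: "A ** (- (B::m2)) = - (A ** B)"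
  by (simp add: vec_eq_iff matrix_matrix_mult_def sum_2)

lemma det_neg: "det (- (A::m2)) = det A"
  by (simp add: det_2)

lemma inv_neg:
  assumes "det (A::m2) = 1"
  shows "matrix_inv (- A) = - matrix_inv A"
  by (rule matrix_inv_eq) (simp_all add: neg_mult_left neg_mult_right det1_inv[OF assms])

lemma mpow_neg: "mpow (- A) k = (if even k then mpow A k else - mpow A k)"
  by (induction k) (simp_all add: neg_mult_left neg_mult_right)

lemma zpow_neg:
  assumes "det A = 1"
  shows "zpow (- A) n = zpow A n \<or> zpow (- A) n = - zpow A n"
  unfolding zpow_def inv_neg[OF assms] mpow_neg by auto

lemma rel_negL:
  assumes "det L = 1"
  shows "rel_lhs (- L) B = - rel_lhs L B" "rel_rhs (- L) B = rel_rhs L B"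
  unfolding rel_lhs_def rel_rhs_def inv_neg[OF assms] by (simp_all add: neg_mult_left neg_mult_right)

lemma rel_negB:
  assumes "det B = 1"
  shows "rel_lhs L (- B) = rel_lhs L B" "rel_rhs L (- B) = rel_rhs L B"
  unfolding rel_lhs_def rel_rhs_def inv_neg[OF assms] by (simp_all add: neg_mult_left neg_mult_right)

lemma fill_negB:
  assumes "det B = 1"
  shows "fill_img L (- B) n = - fill_img L B n"
  unfolding fill_img_def mu_img_def inv_neg[OF assms] by (simp add: neg_mult_left neg_mult_right)

lemma fill_negL:
  assumes "det L = 1"
  shows "fill_img (- L) B n = fill_img L B n \<or> fill_img (- L) B n = - fill_img L B n"
proof -
  have m: "mu_img (- L) B = mu_img L B"
    unfolding mu_img_def inv_neg[OF assms] by (simp add: neg_mult_left neg_mult_right)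
  show ?thesis using zpow_neg[OF assms, of n] unfolding fill_img_def m
    by (auto simp: neg_mult_right)
qed

lemma psl_triv:
  assumes rep: "PSL2_rep n L B" and n: "n \<le> -5"
  shows "(L = mat 1 \<or> L = - mat 1) \<and> (B = mat 1 \<or> B = - mat 1)"
proof -
  have dL: "det L = 1" and dB: "det B = 1" using rep by (auto simp: PSL2_rep_def SL2_def)
  have rr: "rel_lhs L B = rel_rhs L B \<or> rel_lhs L B = - rel_rhs L B"
    and ff: "fill_img L B n = mat 1 \<or> fill_img L B n = - mat 1"
    using rep by (auto simp: PSL2_rep_def)
  obtain L1 where L1: "L1 = L \<or> L1 = - L" and r1: "rel_lhs L1 B = rel_rhs L1 B"
    and f1: "fill_img L1 B n = mat 1 \<or> fill_img L1 B n = - mat 1"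
  proof (cases "rel_lhs L B = rel_rhs L B")
    case True
    then show ?thesis using that ff by blast
  next
    case False
    then have h: "rel_lhs L B = - rel_rhs L B" using rr by blast
    have "rel_lhs (- L) B = rel_rhs (- L) B" unfolding rel_negL[OF dL] h by simp
    moreover have "fill_img (- L) B n = mat 1 \<or> fill_img (- L) B n = - mat 1"
      using fill_negL[OF dL, of B n] ff by auto
    ultimately show ?thesis using that by blast
  qed
  have dL1: "det L1 = 1" using L1 dL det_neg by auto
  obtain B1 where B1: "B1 = B \<or> B1 = - B" and r2: "rel_lhs L1 B1 = rel_rhs L1 B1"
    and f2: "fill_img L1 B1 n = mat 1"
  proof (cases "fill_img L1 B n = mat 1")
    case True
    then show ?thesis using that r1 by blast
  next
    case False
    then have h: "fill_img L1 B n = - mat 1" using f1 by blast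
    have "fill_img L1 (- B) n = mat 1" unfolding fill_negB[OF dB] h by simp
    moreover have "rel_lhs L1 (- B) = rel_rhs L1 (- B)" unfolding rel_negB[OF dB] by (rule r1)
    ultimately show ?thesis using that by blast
  qed
  have dB1: "det B1 = 1" using B1 dB det_neg by auto
  have "SL2_rep n L1 B1" unfolding SL2_rep_def SL2_def using dL1 dB1 r2 f2 by simp
  then have "L1 = mat 1 \<and> B1 = mat 1" using sl2_triv n by blast
  then show ?thesis using L1 B1 by (metis minus_minus)
qed

theorem mainTheorem5:
  shows "\<exists>N::int. \<forall>n\<le>N.
           (\<forall>L B. SL2_rep n L B \<longrightarrow> L = mat 1 \<and> B = mat 1)
         \<and> (\<forall>L B. PSL2_rep n L B \<longrightarrow> (L = mat 1 \<or> L = - mat 1) \<and> (B = mat 1 \<or> B = - mat 1))"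
proof (rule exI[of _ "-5"], rule allI, rule impI)
  fix n :: int
  assume n: "n \<le> -5"
  show "(\<forall>L B. SL2_rep n L B \<longrightarrow> L = mat 1 \<and> B = mat 1)
         \<and> (\<forall>L B. PSL2_rep n L B \<longrightarrow> (L = mat 1 \<or> L = - mat 1) \<and> (B = mat 1 \<or> B = - mat 1))"
    using sl2_triv[OF _ n] psl_triv[OF _ n] by blast
qed

end
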